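(* Let $(X,x_0)$ be a pointed space. Then $\mathcal{H}_n(X,x_0)$ is an abelian group for all $n\geq2$.
   Context: For $n\geq1$, the $n$-dimensional Hawaiian earring is $\mathbb{H}^n=\{(r_0,\dots,r_n)\in\mathbb{R}^{n+1} : (r_0-1/k)^2+\sum_{i=1}^n r_i^2=(1/k)^2 \text{ for some } k\in\mathbb{N}\}$ with base point $\theta=(0,\dots,0)$; $S^n_k$ denotes the $n$-sphere of radius $1/k$ in it. For a pointed space $(X,x_0)$, the $n$-Hawaiian group $\mathcal{H}_n(X,x_0)$ is the set of pointed homotopy classes (rel $\{\theta\}$) of continuous maps $f:(\mathbb{H}^n,\theta)\to(X,x_0)$, with group operation $[f][g]=[f\ast g]$, where $(f\ast g)|_{S^n_k}$ is the usual concatenation (as in $\pi_n$) of $f|_{S^n_k}$ and $g|_{S^n_k}$ for each $k$. *)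

theory Defs
  imports "HOL-Analysis.Analysis" "HOL-Algebra.Group"
begin

text \<open>Points of R^(n+1) are functions nat => real vanishing from index n+1 on
  (coordinates r_0,...,r_n), with the topology Euclidean_space (Suc n).\<close>

definition hbase :: "nat \<Rightarrow> real" where
  "hbase = (\<lambda>i. 0)"

definition hsphere :: "nat \<Rightarrow> nat \<Rightarrow> (nat \<Rightarrow> real) set" where
  "hsphere n k = {r. (\<forall>i>n. r i = 0) \<and>
      (r 0 - 1 / real k)^2 + (\<Sum>i\<in>{1..n}. (r i)^2) = (1 / real k)^2}"

definition hawaiian :: "nat \<Rightarrow> (nat \<Rightarrow> real) set" where
  "hawaiian n = (\<Union>k\<in>{1..}. hsphere n k)"

definition hawaiian_top :: "nat \<Rightarrow> (nat \<Rightarrow> real) topology" where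
  "hawaiian_top n = subtopology (Euclidean_space (Suc n)) (hawaiian n)"

text \<open>The index k of the sphere containing a point p different from the base point.\<close>
definition hindex :: "nat \<Rightarrow> (nat \<Rightarrow> real) \<Rightarrow> nat" where
  "hindex n p = (THE k. k \<ge> 1 \<and> p \<in> hsphere n k)"

definition hcube :: "nat \<Rightarrow> (nat \<Rightarrow> real) set" where
  "hcube n = {s. (\<forall>i\<in>{1..n}. 0 \<le> s i \<and> s i \<le> 1) \<and> (\<forall>i. i = 0 \<or> n < i \<longrightarrow> s i = 0)}"

text \<open>A fixed standard quotient map I^n -> S^n_k, collapsing the boundary of the cube
  to the base point and injective on the interior (identifying I^n / boundary with S^n_k).\<close>
definition hquot :: "nat \<Rightarrow> nat \<Rightarrow> (nat \<Rightarrow> real) \<Rightarrow> (nat \<Rightarrow> real)" where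
  "hquot n k s =
     (let v = (\<lambda>i. 2 * s i - 1);
          m = Max ((\<lambda>i. \<bar>v i\<bar>) ` {1..n});
          e = sqrt (\<Sum>i\<in>{1..n}. (v i)^2)
      in (\<lambda>i. if i = 0 then 1 / real k + (1 / real k) * cos (pi * m)
              else if i \<le> n then (if e = 0 then 0 else (1 / real k) * sin (pi * m) * v i / e)
              else 0))"

definition cube_concat :: "((nat \<Rightarrow> real) \<Rightarrow> 'a) \<Rightarrow> ((nat \<Rightarrow> real) \<Rightarrow> 'a) \<Rightarrow> (nat \<Rightarrow> real) \<Rightarrow> 'a" where
  "cube_concat f g s = (if s 1 \<le> 1/2 then f (s(1 := 2 * s 1)) else g (s(1 := 2 * s 1 - 1)))"

definition hmul :: "nat \<Rightarrow> ((nat \<Rightarrow> real) \<Rightarrow> 'a) \<Rightarrow> ((nat \<Rightarrow> real) \<Rightarrow> 'a) \<Rightarrow> (nat \<Rightarrow> real) \<Rightarrow> 'a" where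
  "hmul n f g p =
     (if p = hbase then f hbase
      else let k = hindex n p
           in cube_concat (f \<circ> hquot n k) (g \<circ> hquot n k)
                 (SOME s. s \<in> hcube n \<and> hquot n k s = p))"

definition hclass :: "nat \<Rightarrow> 'a topology \<Rightarrow> 'a \<Rightarrow> ((nat \<Rightarrow> real) \<Rightarrow> 'a) \<Rightarrow> ((nat \<Rightarrow> real) \<Rightarrow> 'a) set" where
  "hclass n X x0 f = {g. homotopic_with (\<lambda>h. h hbase = x0) (hawaiian_top n) X f g}"

definition hawaiian_group :: "nat \<Rightarrow> 'a topology \<Rightarrow> 'a \<Rightarrow> ((nat \<Rightarrow> real) \<Rightarrow> 'a) set monoid" where
  "hawaiian_group n X x0 =
     \<lparr> carrier = {hclass n X x0 f | f. continuous_map (hawaiian_top n) X f \<and> f hbase = x0},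
       mult = (\<lambda>A B. hclass n X x0 (hmul n (SOME f. f \<in> A) (SOME g. g \<in> B))),
       one = hclass n X x0 (\<lambda>_. x0) \<rparr>"

end

theory Submission
  imports Defs
begin

lemma hawtop: "hawaiian_top n = top_of_set (hawaiian n)"
proof -
  have "hawaiian n \<subseteq> {x. \<forall>i\<ge>Suc n. x i = 0}"
    by (auto simp: hawaiian_def hsphere_def)
  then show ?thesis
    unfolding hawaiian_top_def Euclidean_space_def euclidean_product_topology
    by (simp add: subtopology_subtopology Int_absorb1)
qed

definition mm :: "nat \<Rightarrow> (nat \<Rightarrow> real) \<Rightarrow> real" where
  "mm n s = Max ((\<lambda>i. \<bar>2 * s i - 1\<bar>) ` {1..n})"
definition ee :: "nat \<Rightarrow> (nat \<Rightarrow> real) \<Rightarrow> real" where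
  "ee n s = sqrt (\<Sum>i\<in>{1..n}. (2 * s i - 1)^2)"
definition phi :: "nat \<Rightarrow> (nat \<Rightarrow> real) \<Rightarrow> (nat \<Rightarrow> real)" where
  "phi n s = (\<lambda>i. if i = 0 then 1 + cos (pi * mm n s)
      else if i \<le> n then sin (pi * mm n s) * (2 * s i - 1) / ee n s else 0)"

lemma hquot_eq: "hquot n k s = (\<lambda>i. (1 / real k) * phi n s i)"
  unfolding hquot_def phi_def mm_def ee_def Let_def
  by (auto simp: fun_eq_iff algebra_simps add_divide_distrib)

definition bd :: "nat \<Rightarrow> (nat \<Rightarrow> real) \<Rightarrow> bool" where
  "bd n s = (\<exists>i\<in>{1..n}. s i = 0 \<or> s i = 1)"

lemma mm_ge: "i \<in> {1..n} \<Longrightarrow> \<bar>2 * s i - 1\<bar> \<le> mm n s"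
  unfolding mm_def by (rule Max_ge) auto

lemma mm_attained: "n \<ge> 1 \<Longrightarrow> \<exists>i\<in>{1..n}. \<bar>2 * s i - 1\<bar> = mm n s"
proof -
  assume "n \<ge> 1"
  then have "mm n s \<in> (\<lambda>i. \<bar>2 * s i - 1\<bar>) ` {1..n}"
    unfolding mm_def by (intro Max_in) auto
  then show ?thesis by force
qed

lemma mm_nonneg: "n \<ge> 1 \<Longrightarrow> 0 \<le> mm n s"
  using mm_ge[of 1 n s] by force

lemma mm_le1: "n \<ge> 1 \<Longrightarrow> s \<in> hcube n \<Longrightarrow> mm n s \<le> 1"
proof -
  assume n: "n \<ge> 1" and s: "s \<in> hcube n"
  obtain i where i: "i \<in> {1..n}" "\<bar>2 * s i - 1\<bar> = mm n s" using mm_attained[OF n] by blast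
  have "0 \<le> s i" "s i \<le> 1" using s i(1) unfolding hcube_def by auto
  then have "\<bar>2 * s i - 1\<bar> \<le> 1" by (simp add: abs_le_iff)
  then show ?thesis using i by simp
qed

lemma abs_le_ee: "i \<in> {1..n} \<Longrightarrow> \<bar>2 * s i - 1\<bar> \<le> ee n s"
proof -
  assume i: "i \<in> {1..n}"
  have "(2 * s i - 1)^2 \<le> (\<Sum>j\<in>{1..n}. (2 * s j - 1)^2)"
    using i by (intro member_le_sum) auto
  then have "sqrt ((2 * s i - 1)^2) \<le> sqrt (\<Sum>j\<in>{1..n}. (2 * s j - 1)^2)"
    by (rule real_sqrt_le_mono)
  then show ?thesis unfolding ee_def by simp
qed

lemma ee_nonneg: "0 \<le> ee n s"
  unfolding ee_def by (auto intro: sum_nonneg)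

lemma ee_zero: "ee n s = 0 \<longleftrightarrow> (\<forall>i\<in>{1..n}. 2 * s i - 1 = 0)"
  unfolding ee_def by (simp add: sum_nonneg_eq_0_iff)

lemma mm_zero:
  assumes n: "n \<ge> 1" shows "mm n s = 0 \<longleftrightarrow> (\<forall>i\<in>{1..n}. 2 * s i - 1 = 0)"
proof
  assume "mm n s = 0"
  then show "\<forall>i\<in>{1..n}. 2 * s i - 1 = 0" using mm_ge[of _ n s] by (metis abs_le_zero_iff)
next
  assume h: "\<forall>i\<in>{1..n}. 2 * s i - 1 = 0"
  obtain i where i: "i \<in> {1..n}" "\<bar>2 * s i - 1\<bar> = mm n s" using mm_attained[OF n] by blast
  then show "mm n s = 0" using h by simp
qed

lemma mm_one:
  assumes n: "n \<ge> 1" and s: "s \<in> hcube n" shows "mm n s = 1 \<longleftrightarrow> bd n s"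
proof
  assume "mm n s = 1"
  then obtain i where i: "i \<in> {1..n}" "\<bar>2 * s i - 1\<bar> = 1" using mm_attained[OF n, of s] by auto
  then have "s i = 0 \<or> s i = 1" by (auto simp: abs_eq_iff)
  then show "bd n s" unfolding bd_def using i(1) by blast
next
  assume "bd n s"
  then obtain i where i: "i \<in> {1..n}" "s i = 0 \<or> s i = 1" unfolding bd_def by auto
  then have "1 \<le> mm n s" using mm_ge[OF i(1), of s] by auto
  then show "mm n s = 1" using mm_le1[OF n s] by auto
qed

lemma phi_sphere: "n \<ge> 1 \<Longrightarrow> (phi n s 0 - 1)^2 + (\<Sum>i\<in>{1..n}. (phi n s i)^2) = 1"
proof (cases "ee n s = 0")
  case True
  assume n: "n \<ge> 1"
  then have "mm n s = 0" using True by (simp add: ee_zero mm_zero)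
  then show ?thesis by (simp add: phi_def)
next
  case False
  have "(\<Sum>i\<in>{1..n}. (phi n s i)^2) = (\<Sum>i\<in>{1..n}. (sin (pi * mm n s))^2 / (ee n s)^2 * (2 * s i - 1)^2)"
    by (rule sum.cong) (auto simp: phi_def power_divide power_mult_distrib)
  also have "\<dots> = (sin (pi * mm n s))^2 / (ee n s)^2 * (\<Sum>i\<in>{1..n}. (2 * s i - 1)^2)"
    by (simp add: sum_distrib_left)
  also have "(\<Sum>i\<in>{1..n}. (2 * s i - 1)^2) = (ee n s)^2"
    unfolding ee_def by (simp add: sum_nonneg)
  finally show ?thesis using False by (simp add: phi_def sin_squared_eq)
qed

lemma phi_high: "i > n \<Longrightarrow> phi n s i = 0"
  by (simp add: phi_def)

lemma hbase_iff: "p = hbase \<longleftrightarrow> (\<forall>i. p i = 0)"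
  by (auto simp: hbase_def)

lemma phi_zero_iff: "n \<ge> 1 \<Longrightarrow> s \<in> hcube n \<Longrightarrow> phi n s = hbase \<longleftrightarrow> bd n s"
proof -
  assume n: "n \<ge> 1" and s: "s \<in> hcube n"
  have m01: "0 \<le> pi * mm n s" "pi * mm n s \<le> pi"
    using mm_nonneg[OF n] mm_le1[OF n s] by auto
  show ?thesis
  proof
    assume "phi n s = hbase"
    then have "phi n s 0 = 0" by (simp add: hbase_def)
    then have "cos (pi * mm n s) = cos pi" by (simp add: phi_def)
    then have "pi * mm n s = pi" using cos_inj_pi[OF m01, of pi] by simp
    then show "bd n s" using mm_one[OF n s] by simp
  next
    assume "bd n s"
    then have "mm n s = 1" using mm_one[OF n s] by simp
    then show "phi n s = hbase" by (auto simp: phi_def hbase_def fun_eq_iff)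
  qed
qed

lemma hcube_out: "s \<in> hcube n \<Longrightarrow> i \<notin> {1..n} \<Longrightarrow> s i = 0"
  unfolding hcube_def by (cases "i = 0") auto

lemma phi_inj:
  assumes n: "n \<ge> 1" and s: "s \<in> hcube n" and s': "s' \<in> hcube n" and nb: "\<not> bd n s"
    and eq: "phi n s = phi n s'"
  shows "s = s'"
proof -
  have nb': "\<not> bd n s'" using nb eq phi_zero_iff[OF n s] phi_zero_iff[OF n s'] by simp
  have m01: "0 \<le> pi * mm n s" "pi * mm n s \<le> pi" "0 \<le> pi * mm n s'" "pi * mm n s' \<le> pi"
    using mm_nonneg[OF n] mm_le1[OF n s] mm_le1[OF n s'] by auto
  have "phi n s 0 = phi n s' 0" using eq by simp
  then have "cos (pi * mm n s) = cos (pi * mm n s')" by (simp add: phi_def)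
  then have "pi * mm n s = pi * mm n s'" using cos_inj_pi[OF m01] by simp
  then have mmeq: "mm n s = mm n s'" by simp
  have vv: "2 * s i - 1 = 2 * s' i - 1" if i: "i \<in> {1..n}" for i
  proof (cases "mm n s = 0")
    case True
    then show ?thesis using mmeq mm_zero[OF n, of s] mm_zero[OF n, of s'] i by auto
  next
    case False
    have mpos: "0 < mm n s" using False mm_nonneg[OF n, of s] by simp
    have mlt: "mm n s < 1" using mm_le1[OF n s] mm_one[OF n s] nb by fastforce
    have sinpos: "0 < sin (pi * mm n s)" using mpos mlt by (intro sin_gt_zero) auto
    have epos: "0 < ee n s"
      using False mm_zero[OF n, of s] ee_zero[of n s] ee_nonneg[of n s] by force
    have epos': "0 < ee n s'"
      using False mmeq mm_zero[OF n, of s'] ee_zero[of n s'] ee_nonneg[of n s'] by force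
    define r where "r = ee n s / ee n s'"
    have rpos: "0 < r" using epos epos' by (simp add: r_def)
    have vr: "2 * s j - 1 = r * (2 * s' j - 1)" if j: "j \<in> {1..n}" for j
    proof -
      have "phi n s j = phi n s' j" using eq by simp
      then have "sin (pi * mm n s) * (2 * s j - 1) / ee n s = sin (pi * mm n s) * (2 * s' j - 1) / ee n s'"
        using j mmeq by (simp add: phi_def)
      then have "sin (pi * mm n s) * ((2 * s j - 1) / ee n s) = sin (pi * mm n s) * ((2 * s' j - 1) / ee n s')"
        by (simp only: times_divide_eq_right)
      moreover have "sin (pi * mm n s) \<noteq> 0" using sinpos by simp
      ultimately have "(2 * s j - 1) / ee n s = (2 * s' j - 1) / ee n s'"
        using mult_left_cancel by blast
      then show ?thesis using epos epos' by (simp add: r_def field_simps)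
    qed
    obtain i0 where i0: "i0 \<in> {1..n}" "\<bar>2 * s i0 - 1\<bar> = mm n s" using mm_attained[OF n] by blast
    obtain i1 where i1: "i1 \<in> {1..n}" "\<bar>2 * s' i1 - 1\<bar> = mm n s'" using mm_attained[OF n] by blast
    have "mm n s = r * \<bar>2 * s' i0 - 1\<bar>" using i0 vr[OF i0(1)] rpos by (simp add: abs_mult)
    also have "\<dots> \<le> r * mm n s'" using mm_ge[OF i0(1), of s'] rpos by simp
    finally have le1: "mm n s \<le> r * mm n s'" .
    have "r * mm n s' = \<bar>2 * s i1 - 1\<bar>" using i1 vr[OF i1(1)] rpos by (simp add: abs_mult)
    also have "\<dots> \<le> mm n s" using mm_ge[OF i1(1), of s] by simp
    finally have "mm n s = r * mm n s'" using le1 by simp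
    then have "r = 1" using mmeq mpos by simp
    then show ?thesis using vr[OF i] by simp
  qed
  show ?thesis
  proof
    fix i show "s i = s' i"
    proof (cases "i \<in> {1..n}")
      case True then show ?thesis using vv[OF True] by simp
    next
      case False then show ?thesis using hcube_out[OF s] hcube_out[OF s'] by simp
    qed
  qed
qed

lemma phi_surj:
  assumes n: "n \<ge> 1" and hi: "\<forall>i>n. p i = 0"
    and sph: "(p 0 - 1)^2 + (\<Sum>i\<in>{1..n}. (p i)^2) = 1"
  shows "\<exists>s\<in>hcube n. phi n s = p"
proof -
  define a where "a = p 0 - 1"
  define S where "S = (\<Sum>i\<in>{1..n}. (p i)^2)"
  have S0: "0 \<le> S" unfolding S_def by (auto intro: sum_nonneg)
  have aS: "a^2 + S = 1" using sph by (simp add: a_def S_def)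
  have a2: "a^2 \<le> 1" using aS S0 by simp
  then have a1: "-1 \<le> a" "a \<le> 1" using abs_square_le_1[of a] by (auto simp: abs_le_iff)
  show ?thesis
  proof (cases "S = 0")
    case True
    then have pz: "p i = 0" if "i \<in> {1..n}" for i
      using that unfolding S_def by (simp add: sum_nonneg_eq_0_iff)
    have "a^2 = 1" using aS True by simp
    then have "a = 1 \<or> a = -1" by (simp add: power2_eq_1_iff)
    then show ?thesis
    proof
      assume "a = 1"
      define s where "s = (\<lambda>i::nat. if i \<in> {1..n} then 1/2 else (0::real))"
      have s: "s \<in> hcube n" unfolding s_def hcube_def by auto
      have "mm n s = 0" using mm_zero[OF n, of s] by (simp add: s_def)
      then have "phi n s = p"
        using \<open>a = 1\<close> pz hi by (auto simp: phi_def fun_eq_iff a_def s_def)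
      then show ?thesis using s by blast
    next
      assume "a = -1"
      define s where "s = (\<lambda>i::nat. (0::real))"
      have s: "s \<in> hcube n" unfolding s_def hcube_def by auto
      have "bd n s" using n unfolding bd_def s_def by auto
      then have "phi n s = hbase" using phi_zero_iff[OF n s] by simp
      also have "hbase = p"
      proof -
        have "p i = 0" for i
        proof -
          consider "i = 0" | "i \<in> {1..n}" | "i > n" by fastforce
          then show ?thesis using \<open>a = -1\<close> pz hi by cases (auto simp: a_def)
        qed
        then show ?thesis by (auto simp: hbase_def)
      qed
      finally show ?thesis using s by blast
    qed
  next
    case False
    then have Spos: "0 < S" using S0 by simp
    define U where "U = sqrt S"
    have Upos: "0 < U" using Spos by (simp add: U_def)
    define th where "th = arccos a"
    have th: "0 \<le> th" "th \<le> pi" "cos th = a" using a1 by (auto simp: th_def arccos_lbound arccos_ubound cos_arccos)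
    have "(sin th)^2 = S" using aS th(3) by (simp add: sin_squared_eq)
    moreover have "0 \<le> sin th" using th by (simp add: sin_ge_zero)
    ultimately have sinU: "sin th = U" unfolding U_def by (metis real_sqrt_abs abs_of_nonneg)
    have th0: "th \<noteq> 0" using sinU Upos by auto
    have thpi: "th \<noteq> pi" using sinU Upos by auto
    define m0 where "m0 = th / pi"
    have m0: "0 < m0" "m0 < 1" using th th0 thpi by (auto simp: m0_def field_simps)
    define w where "w = (\<lambda>i. p i / U)"
    define M where "M = Max ((\<lambda>i. \<bar>w i\<bar>) ` {1..n})"
    have Mge: "\<bar>w i\<bar> \<le> M" if "i \<in> {1..n}" for i unfolding M_def using that by (intro Max_ge) auto
    have "M \<in> (\<lambda>i. \<bar>w i\<bar>) ` {1..n}" unfolding M_def using n by (intro Max_in) auto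
    then obtain i0 where i0: "i0 \<in> {1..n}" "\<bar>w i0\<bar> = M" by auto
    have Mpos: "0 < M"
    proof (rule ccontr)
      assume "\<not> 0 < M"
      then have "w i = 0" if "i \<in> {1..n}" for i using Mge[OF that] by linarith
      then have "p i = 0" if "i \<in> {1..n}" for i using that Upos by (auto simp: w_def)
      then have "S = 0" unfolding S_def by simp
      then show False using Spos by simp
    qed
    define s where "s = (\<lambda>i. if i \<in> {1..n} then (m0 * w i / M + 1) / 2 else 0)"
    have v: "2 * s i - 1 = m0 * w i / M" if "i \<in> {1..n}" for i using that by (simp add: s_def field_simps)
    have vabs: "\<bar>2 * s i - 1\<bar> = (m0 / M) * \<bar>w i\<bar>" if "i \<in> {1..n}" for i
      using v[OF that] m0 Mpos by (simp add: abs_mult abs_divide)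
    have vle: "\<bar>2 * s i - 1\<bar> \<le> m0" if "i \<in> {1..n}" for i
    proof -
      have "(m0 / M) * \<bar>w i\<bar> \<le> (m0 / M) * M" using Mge[OF that] m0 Mpos by (intro mult_left_mono) auto
      then show ?thesis using vabs[OF that] Mpos by simp
    qed
    have s: "s \<in> hcube n"
      unfolding hcube_def
    proof (intro CollectI conjI ballI allI impI)
      fix i assume i: "i \<in> {1..n}"
      have "\<bar>2 * s i - 1\<bar> \<le> 1" using vle[OF i] m0 by simp
      then show "0 \<le> s i" "s i \<le> 1" by (auto simp: abs_le_iff)
    next
      fix i :: nat assume "i = 0 \<or> n < i" then show "s i = 0" by (auto simp: s_def)
    qed
    have mms: "mm n s = m0"
    proof -
      have "mm n s \<le> m0" using mm_attained[OF n, of s] vle by force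
      moreover have "m0 \<le> mm n s" using mm_ge[OF i0(1), of s] vabs[OF i0(1)] i0(2) Mpos by simp
      ultimately show ?thesis by simp
    qed
    have wsum: "(\<Sum>i\<in>{1..n}. (w i)^2) = 1"
    proof -
      have "(\<Sum>i\<in>{1..n}. (w i)^2) = (\<Sum>i\<in>{1..n}. (p i)^2) / U^2"
        by (simp add: w_def power_divide sum_divide_distrib)
      also have "\<dots> = 1" using Spos by (simp add: U_def S_def)
      finally show ?thesis .
    qed
    have ees: "ee n s = m0 / M"
    proof -
      have "(\<Sum>i\<in>{1..n}. (2 * s i - 1)^2) = (\<Sum>i\<in>{1..n}. (m0 / M)^2 * (w i)^2)"
        by (rule sum.cong) (auto simp: v power_divide power_mult_distrib)
      also have "\<dots> = (m0 / M)^2" using wsum by (simp add: sum_distrib_left[symmetric])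
      finally show ?thesis unfolding ee_def using m0 Mpos by simp
    qed
    have "phi n s = p"
    proof
      fix i
      consider "i = 0" | "i \<in> {1..n}" | "i > n" by fastforce
      then show "phi n s i = p i"
      proof cases
        case 1 then show ?thesis using th(3) by (simp add: phi_def mms m0_def a_def)
      next
        case 2
        have "phi n s i = sin th * (m0 * w i / M) / (m0 / M)"
          using 2 by (simp add: phi_def mms ees v m0_def)
        also have "\<dots> = U * w i" using sinU m0 Mpos by (simp add: field_simps)
        also have "\<dots> = p i" using Upos by (simp add: w_def)
        finally show ?thesis .
      next
        case 3 then show ?thesis using hi by (simp add: phi_def)
      qed
    qed
    then show ?thesis using s by blast
  qed
qed

lemma cont_Max:
  fixes f :: "nat \<Rightarrow> 'a::topological_space \<Rightarrow> real"
  assumes "finite I" "I \<noteq> {}" "\<And>i. i \<in> I \<Longrightarrow> continuous_on S (f i)"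
  shows "continuous_on S (\<lambda>x. Max ((\<lambda>i. f i x) ` I))"
  using assms
proof (induction I rule: finite_ne_induct)
  case (singleton a)
  then show ?case by simp
next
  case (insert a F)
  have eq: "(\<lambda>x. Max ((\<lambda>i. f i x) ` insert a F)) = (\<lambda>x. max (f a x) (Max ((\<lambda>i. f i x) ` F)))"
    using insert.hyps by (auto simp: Max_insert)
  show ?case unfolding eq using insert by (intro continuous_on_max) auto
qed

lemma cont_coord: "continuous_on S (\<lambda>s::nat\<Rightarrow>real. s i)"
  by (rule continuous_on_subset[OF continuous_on_product_coordinates]) auto

lemma cont_mm: "continuous_on UNIV (mm n)"
proof (cases "n = 0")
  case True then show ?thesis by (simp add: mm_def)
next
  case False
  have "continuous_on UNIV (\<lambda>s::nat\<Rightarrow>real. \<bar>2 * s i - 1\<bar>)" for i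
    by (intro continuous_on_rabs continuous_on_diff continuous_on_mult continuous_on_const cont_coord)
  then show ?thesis unfolding mm_def
    using False by (intro cont_Max) auto
qed

lemma cont_ee: "continuous_on UNIV (ee n)"
  unfolding ee_def
  by (intro continuous_on_sum continuous_on_power continuous_on_real_sqrt continuous_on_diff continuous_on_mult continuous_on_const cont_coord)

lemma isCont_mm: "isCont (mm n) x"
  by (rule continuous_on_interior[OF cont_mm]) simp

lemma isCont_ee: "isCont (ee n) x"
  by (rule continuous_on_interior[OF cont_ee]) simp

lemma isCont_coord: "isCont (\<lambda>s::nat\<Rightarrow>real. s i) x"
  by (rule continuous_on_interior[OF continuous_on_product_coordinates]) simp

lemma cont_phi_i:
  assumes n: "n \<ge> 1" and i: "i \<in> {1..n}"
  shows "isCont (\<lambda>s. sin (pi * mm n s) * (2 * s i - 1) / ee n s) x"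
proof (cases "ee n x = 0")
  case False
  have c1: "((\<lambda>s. mm n s) \<longlongrightarrow> mm n x) (at x)" using isCont_mm unfolding isCont_def .
  have c2: "((\<lambda>s. ee n s) \<longlongrightarrow> ee n x) (at x)" using isCont_ee unfolding isCont_def .
  have c3: "((\<lambda>s::nat\<Rightarrow>real. s i) \<longlongrightarrow> x i) (at x)" using isCont_coord unfolding isCont_def .
  show ?thesis unfolding isCont_def using False
    by (intro tendsto_divide tendsto_mult tendsto_sin tendsto_diff tendsto_const c1 c2 c3)
next
  case True
  then have m0: "mm n x = 0" using mm_zero[OF n] ee_zero by simp
  let ?g = "\<lambda>s. sin (pi * mm n s) * (2 * s i - 1) / ee n s"
  have gx: "?g x = 0" using True by simp
  have bound: "norm (?g s) \<le> \<bar>sin (pi * mm n s)\<bar>" for s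
  proof (cases "ee n s = 0")
    case True then show ?thesis by simp
  next
    case False
    have "\<bar>2 * s i - 1\<bar> / ee n s \<le> 1"
      using abs_le_ee[OF i, of s] False ee_nonneg[of n s] by (simp add: divide_le_eq_1)
    then have "\<bar>sin (pi * mm n s)\<bar> * (\<bar>2 * s i - 1\<bar> / ee n s) \<le> \<bar>sin (pi * mm n s)\<bar> * 1"
      by (intro mult_left_mono) auto
    then show ?thesis using ee_nonneg[of n s] by (simp add: abs_mult abs_divide)
  qed
  have "((\<lambda>s. \<bar>sin (pi * mm n s)\<bar>) \<longlongrightarrow> \<bar>sin (pi * mm n x)\<bar>) (at x)"
    by (intro tendsto_rabs tendsto_sin tendsto_mult tendsto_const isCont_tendsto_compose[OF isCont_mm] tendsto_ident_at)
  then have lim0: "((\<lambda>s. \<bar>sin (pi * mm n s)\<bar>) \<longlongrightarrow> 0) (at x)" using m0 by simp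
  have "(?g \<longlongrightarrow> 0) (at x)"
    by (rule Lim_null_comparison[OF _ lim0]) (intro always_eventually allI bound)
  then show ?thesis unfolding isCont_def by (subst gx)
qed

lemma cont_phi: assumes n: "n \<ge> 1" shows "continuous_on UNIV (phi n)"
proof (intro continuous_on_coordinatewise_then_product)
  fix i
  show "continuous_on UNIV (\<lambda>s. phi n s i)"
  proof (cases "i = 0")
    case True
    then show ?thesis unfolding phi_def by (simp, intro continuous_on_add continuous_on_cos continuous_on_mult continuous_on_const cont_mm)
  next
    case False
    show ?thesis
    proof (cases "i \<le> n")
      case True
      then have i: "i \<in> {1..n}" using False by auto
      have "continuous_on UNIV (\<lambda>s. sin (pi * mm n s) * (2 * s i - 1) / ee n s)"
        using cont_phi_i[OF n i] by (meson continuous_at_imp_continuous_on)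
      then show ?thesis using False True unfolding phi_def by simp
    next
      case False2: False
      then show ?thesis using False unfolding phi_def by simp
    qed
  qed
qed

definition Kset :: "real set" where "Kset = insert 0 ((\<lambda>k. 1 / real (Suc k)) ` UNIV)"
definition Zset :: "nat \<Rightarrow> (real \<times> (nat \<Rightarrow> real)) set" where "Zset n = Kset \<times> hcube n"
definition Q :: "nat \<Rightarrow> real \<times> (nat \<Rightarrow> real) \<Rightarrow> (nat \<Rightarrow> real)" where
  "Q n z = (\<lambda>i. fst z * phi n (snd z) i)"
definition bdZ :: "nat \<Rightarrow> real \<times> (nat \<Rightarrow> real) \<Rightarrow> bool" where
  "bdZ n z = (fst z = 0 \<or> bd n (snd z))"

lemma compact_Kset: "compact Kset"
proof -
  have "(\<lambda>k. 1 / real (Suc k)) \<longlonglongrightarrow> 0"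
    using LIMSEQ_inverse_real_of_nat by (simp add: inverse_eq_divide)
  then show ?thesis unfolding Kset_def by (rule compact_sequence_with_limit)
qed

lemma hcube_PiE: "hcube n = PiE UNIV (\<lambda>i. if i \<in> {1..n} then {0..1} else {0})"
proof -
  have "x \<in> hcube n \<longleftrightarrow> (\<forall>i. x i \<in> (if i \<in> {1..n} then {0..1} else {0}))" for x
  proof -
    have "(\<forall>i. x i \<in> (if i \<in> {1..n} then {0..1} else {0})) \<longleftrightarrow>
      (\<forall>i. (i \<in> {1..n} \<longrightarrow> 0 \<le> x i \<and> x i \<le> 1) \<and> (i \<notin> {1..n} \<longrightarrow> x i = 0))"
      by auto
    also have "\<dots> \<longleftrightarrow> x \<in> hcube n"
      unfolding hcube_def by (auto simp: not_le)
    finally show ?thesis by simp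
  qed
  then show ?thesis by (auto simp: PiE_UNIV_domain)
qed

lemma compact_hcube: "compact (hcube n)"
proof -
  have "compactin (powertop_real UNIV) (PiE UNIV (\<lambda>i. if i \<in> {1..n} then {0..1::real} else {0}))"
    by (subst compactin_PiE) auto
  then show ?thesis unfolding hcube_PiE euclidean_product_topology by simp
qed

lemma compact_Zset: "compact (Zset n)"
  unfolding Zset_def by (intro compact_Times compact_Kset compact_hcube)

lemma Kset_cases: "t \<in> Kset \<Longrightarrow> t = 0 \<or> (\<exists>k\<ge>1. t = 1 / real k)"
proof -
  assume "t \<in> Kset"
  then consider "t = 0" | k where "t = 1 / real (Suc k)" unfolding Kset_def by auto
  then show ?thesis
  proof cases
    case 1 then show ?thesis by simp
  next
    case (2 k)
    then have "Suc k \<ge> 1 \<and> t = 1 / real (Suc k)" by simp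
    then show ?thesis by blast
  qed
qed

lemma Kset_nonneg: "t \<in> Kset \<Longrightarrow> 0 \<le> t"
  unfolding Kset_def by auto

lemma Kset_inv: "k \<ge> 1 \<Longrightarrow> 1 / real k \<in> Kset"
  unfolding Kset_def by (cases k) auto

lemma cont_Q: assumes n: "n \<ge> 1" shows "continuous_on UNIV (Q n)"
  unfolding Q_def
proof (intro continuous_on_coordinatewise_then_product)
  fix i
  have "continuous_on UNIV (\<lambda>z::real \<times> (nat\<Rightarrow>real). phi n (snd z) i)"
    by (rule continuous_on_compose2[OF continuous_on_product_then_coordinatewise[OF cont_phi[OF n], of i]])
       (auto intro: continuous_on_snd continuous_on_id)
  then show "continuous_on UNIV (\<lambda>z::real \<times> (nat\<Rightarrow>real). fst z * phi n (snd z) i)"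
    by (intro continuous_on_mult continuous_on_fst continuous_on_id)
qed

lemma hquot_Q: "hquot n k s = Q n (1 / real k, s)"
  by (simp add: hquot_eq Q_def)

lemma sphere_N:
  assumes "p \<in> hsphere n k"
  shows "(p 0)^2 + (\<Sum>i\<in>{1..n}. (p i)^2) = 2 * p 0 / real k"
proof -
  have "(p 0 - 1 / real k)^2 + (\<Sum>i\<in>{1..n}. (p i)^2) = (1 / real k)^2"
    using assms unfolding hsphere_def by simp
  then show ?thesis unfolding power2_diff by (simp add: algebra_simps)
qed

lemma N_zero:
  assumes "\<forall>i>n. p i = 0" "(p 0)^2 + (\<Sum>i\<in>{1..n}. (p i)^2) = 0"
  shows "p = hbase"
proof -
  have S: "0 \<le> (\<Sum>i\<in>{1..n}. (p i)^2)" by (auto intro: sum_nonneg)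
  have "0 \<le> (p 0)^2" by simp
  then have "(p 0)^2 = 0" using S assms(2) by linarith
  then have p0: "p 0 = 0" by simp
  then have "(\<Sum>i\<in>{1..n}. (p i)^2) = 0" using assms(2) by simp
  then have ps: "\<forall>i\<in>{1..n}. p i = 0" by (simp add: sum_nonneg_eq_0_iff)
  have "p i = 0" for i
  proof -
    consider "i = 0" | "i \<in> {1..n}" | "i > n" by fastforce
    then show ?thesis using p0 ps assms(1) by cases auto
  qed
  then show ?thesis unfolding hbase_def by auto
qed

lemma sphere_unique:
  assumes "p \<in> hsphere n k" "p \<in> hsphere n k'" "k \<ge> 1" "k' \<ge> 1" "p \<noteq> hbase"
  shows "k = k'"
proof -
  have hi: "\<forall>i>n. p i = 0" using assms(1) unfolding hsphere_def by blast
  have e: "2 * p 0 / real k = 2 * p 0 / real k'" using sphere_N[OF assms(1)] sphere_N[OF assms(2)] by linarith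
  show ?thesis
  proof (cases "p 0 = 0")
    case True
    have "(p 0)^2 + (\<Sum>i\<in>{1..n}. (p i)^2) = 0" using sphere_N[OF assms(1)] True by simp
    then have "p = hbase" by (rule N_zero[OF hi])
    then show ?thesis using assms(5) by simp
  next
    case False
    have "real k \<noteq> 0" "real k' \<noteq> 0" using assms(3,4) by auto
    then have "2 * p 0 * real k' = 2 * p 0 * real k" using e frac_eq_eq by blast
    then have "real k' = real k" using False by simp
    then show ?thesis by simp
  qed
qed

lemma hquot_sphere:
  assumes n: "n \<ge> 1" and k: "k \<ge> 1"
  shows "hquot n k s \<in> hsphere n k"
proof -
  have "(1 / real k * phi n s 0 - 1 / real k)^2 + (\<Sum>i\<in>{1..n}. (1 / real k * phi n s i)^2)
      = (1 / real k)^2 * ((phi n s 0 - 1)^2 + (\<Sum>i\<in>{1..n}. (phi n s i)^2))"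
  proof -
    have t1: "1 / real k * phi n s 0 - 1 / real k = 1 / real k * (phi n s 0 - 1)" by (simp add: right_diff_distrib)
    have t2: "(\<Sum>i\<in>{1..n}. (1 / real k * phi n s i)^2) = (1 / real k)^2 * (\<Sum>i\<in>{1..n}. (phi n s i)^2)"
      by (simp only: power_mult_distrib sum_distrib_left)
    show ?thesis unfolding t1 t2 by (simp only: power_mult_distrib distrib_left)
  qed
  also have "\<dots> = (1 / real k)^2" using phi_sphere[OF n] by simp
  finally show ?thesis unfolding hsphere_def hquot_eq by (auto simp: phi_high)
qed

lemma hbase_hawaiian: "hbase \<in> hawaiian n"
  unfolding hawaiian_def hsphere_def hbase_def
  by (rule UN_I[of 1]) auto

lemma Q_zero_t: "Q n (0, s) = hbase"
  by (simp add: Q_def hbase_def)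

lemma Q_image: assumes n: "n \<ge> 1" shows "Q n ` Zset n = hawaiian n"
proof
  show "Q n ` Zset n \<subseteq> hawaiian n"
  proof
    fix p assume "p \<in> Q n ` Zset n"
    then obtain t s where ts: "t \<in> Kset" "s \<in> hcube n" "p = Q n (t, s)" by (auto simp: Zset_def)
    from Kset_cases[OF ts(1)] show "p \<in> hawaiian n"
    proof
      assume "t = 0" then show ?thesis using ts hbase_hawaiian Q_zero_t by simp
    next
      assume "\<exists>k\<ge>1. t = 1 / real k"
      then obtain k where k: "k \<ge> 1" "t = 1 / real k" by blast
      then have "p = hquot n k s" using ts by (simp add: hquot_Q)
      then show ?thesis using hquot_sphere[OF n k(1)] k(1) unfolding hawaiian_def by auto
    qed
  qed
next
  show "hawaiian n \<subseteq> Q n ` Zset n"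
  proof
    fix p assume "p \<in> hawaiian n"
    then obtain k where k: "k \<ge> 1" "p \<in> hsphere n k" unfolding hawaiian_def by auto
    define q where "q = (\<lambda>i. real k * p i)"
    have kpos: "0 < real k" using k by simp
    have "(q 0 - 1)^2 + (\<Sum>i\<in>{1..n}. (q i)^2) = (real k)^2 * ((p 0 - 1 / real k)^2 + (\<Sum>i\<in>{1..n}. (p i)^2))"
      using kpos by (simp add: q_def power_mult_distrib sum_distrib_left power2_eq_square field_simps)
    also have "\<dots> = 1" using k(2) kpos unfolding hsphere_def by (simp add: power_divide)
    finally have qs: "(q 0 - 1)^2 + (\<Sum>i\<in>{1..n}. (q i)^2) = 1" .
    have qh: "\<forall>i>n. q i = 0" using k(2) by (simp add: q_def hsphere_def)
    obtain s where s: "s \<in> hcube n" "phi n s = q" using phi_surj[OF n qh qs] by blast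
    have "Q n (1 / real k, s) = p" using s kpos by (simp add: Q_def q_def fun_eq_iff)
    moreover have "(1 / real k, s) \<in> Zset n" using Kset_inv[OF k(1)] s(1) by (simp add: Zset_def)
    ultimately show "p \<in> Q n ` Zset n" by (metis image_eqI)
  qed
qed

lemma Q_base: assumes n: "n \<ge> 1" and z: "z \<in> Zset n" shows "Q n z = hbase \<longleftrightarrow> bdZ n z"
proof -
  obtain t s where ts: "z = (t, s)" "t \<in> Kset" "s \<in> hcube n" using z by (auto simp: Zset_def)
  show ?thesis
  proof (cases "t = 0")
    case True then show ?thesis using ts by (simp add: Q_zero_t bdZ_def)
  next
    case False
    have "Q n z = hbase \<longleftrightarrow> phi n s = hbase"
      using False ts by (auto simp: Q_def hbase_def fun_eq_iff)
    then show ?thesis using phi_zero_iff[OF n ts(3)] False ts by (simp add: bdZ_def)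
  qed
qed

lemma Q_inj:
  assumes n: "n \<ge> 1" and z: "z \<in> Zset n" and z': "z' \<in> Zset n" and eq: "Q n z = Q n z'"
    and nb: "\<not> bdZ n z"
  shows "z = z'"
proof -
  obtain t s where ts: "z = (t, s)" "t \<in> Kset" "s \<in> hcube n" using z by (auto simp: Zset_def)
  obtain t' s' where ts': "z' = (t', s')" "t' \<in> Kset" "s' \<in> hcube n" using z' by (auto simp: Zset_def)
  have nb': "\<not> bdZ n z'" using Q_base[OF n z] Q_base[OF n z'] eq nb by simp
  have t0: "t \<noteq> 0" "t' \<noteq> 0" using nb nb' ts ts' by (auto simp: bdZ_def)
  obtain k where k: "k \<ge> 1" "t = 1 / real k" using Kset_cases[OF ts(2)] t0 by auto
  obtain k' where k': "k' \<ge> 1" "t' = 1 / real k'" using Kset_cases[OF ts'(2)] t0 by auto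
  have p1: "Q n z \<in> hsphere n k" using hquot_sphere[OF n k(1), of s] ts k by (simp add: hquot_Q)
  have p2: "Q n z \<in> hsphere n k'" using hquot_sphere[OF n k'(1), of s'] ts' k' eq by (simp add: hquot_Q)
  have "Q n z \<noteq> hbase" using Q_base[OF n z] nb by simp
  then have "k = k'" using sphere_unique[OF p1 p2 k(1) k'(1)] by simp
  then have tt: "t = t'" using k k' by simp
  have "phi n s = phi n s'"
  proof
    fix i
    have "t * phi n s i = t' * phi n s' i" using eq ts ts' by (simp add: Q_def fun_eq_iff)
    then show "phi n s i = phi n s' i" using tt t0 by simp
  qed
  then have "s = s'" using phi_inj[OF n ts(3) ts'(3)] nb ts by (simp add: bdZ_def)
  then show ?thesis using tt ts ts' by simp
qed

lemma hindex_hquot: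
  assumes n: "n \<ge> 1" and k: "k \<ge> 1" and nb: "hquot n k s \<noteq> hbase"
  shows "hindex n (hquot n k s) = k"
  unfolding hindex_def
proof (rule the_equality)
  show "1 \<le> k \<and> hquot n k s \<in> hsphere n k" using k hquot_sphere[OF n k] by simp
next
  fix k' assume "1 \<le> k' \<and> hquot n k s \<in> hsphere n k'"
  then show "k' = k" using sphere_unique[OF _ hquot_sphere[OF n k] _ k nb] by blast
qed

definition Dset :: "nat \<Rightarrow> ((real \<times> real) \<times> (nat \<Rightarrow> real)) set" where
  "Dset n = ({0..1} \<times> Kset) \<times> hcube n"

definition Phi :: "nat \<Rightarrow> (real \<times> real) \<times> (nat \<Rightarrow> real) \<Rightarrow> real \<times> (nat \<Rightarrow> real)" where
  "Phi n w = (fst (fst w), Q n (snd (fst w), snd w))"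

definition iota :: "nat \<Rightarrow> (nat \<Rightarrow> real) \<Rightarrow> real \<times> (nat \<Rightarrow> real)" where
  "iota n p = (SOME z. z \<in> Zset n \<and> Q n z = p)"

lemma iota_Q:
  assumes n: "n \<ge> 1" and z: "z \<in> Zset n"
  shows "iota n (Q n z) \<in> Zset n" "Q n (iota n (Q n z)) = Q n z"
    "bdZ n z \<Longrightarrow> bdZ n (iota n (Q n z))" "\<not> bdZ n z \<Longrightarrow> iota n (Q n z) = z"
proof -
  have ex: "\<exists>z'. z' \<in> Zset n \<and> Q n z' = Q n z" using z by blast
  show i1: "iota n (Q n z) \<in> Zset n" and i2: "Q n (iota n (Q n z)) = Q n z"
    unfolding iota_def using someI_ex[OF ex] by auto
  show "bdZ n z \<Longrightarrow> bdZ n (iota n (Q n z))"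
    using Q_base[OF n z] Q_base[OF n i1] i2 by simp
  show "\<not> bdZ n z \<Longrightarrow> iota n (Q n z) = z"
    using Q_inj[OF n z i1 i2[symmetric]] by simp
qed

lemma quotient_Phi:
  assumes n: "n \<ge> 1"
  shows "quotient_map (top_of_set (Dset n)) (top_of_set ({0..1} \<times> hawaiian n)) (Phi n)"
proof (rule continuous_closed_imp_quotient_map)
  have img: "Phi n ` Dset n = {0..1} \<times> hawaiian n"
  proof
    show "Phi n ` Dset n \<subseteq> {0..1} \<times> hawaiian n"
      using Q_image[OF n] by (auto simp: Phi_def Dset_def Zset_def)
  next
    show "{0..1} \<times> hawaiian n \<subseteq> Phi n ` Dset n"
    proof
      fix y assume "y \<in> {0..1::real} \<times> hawaiian n"
      then obtain tau p where y: "y = (tau, p)" "tau \<in> {0..1}" "p \<in> hawaiian n" by auto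
      then obtain z where z: "z \<in> Zset n" "p = Q n z" using Q_image[OF n] by blast
      then have "((tau, fst z), snd z) \<in> Dset n" using y by (auto simp: Dset_def Zset_def)
      moreover have "Phi n ((tau, fst z), snd z) = y" using y z by (simp add: Phi_def)
      ultimately show "y \<in> Phi n ` Dset n" by (metis image_eqI)
    qed
  qed
  have cont: "continuous_on (Dset n) (Phi n)"
  proof -
    have "continuous_on UNIV (\<lambda>w::(real \<times> real) \<times> (nat \<Rightarrow> real). Q n (snd (fst w), snd w))"
      by (rule continuous_on_compose2[OF cont_Q[OF n]])
         (auto intro!: continuous_on_Pair continuous_on_snd continuous_on_fst continuous_on_id)
    then have "continuous_on UNIV (Phi n)" unfolding Phi_def
      by (intro continuous_on_Pair) (auto intro!: continuous_on_snd continuous_on_fst continuous_on_id)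
    then show ?thesis by (rule continuous_on_subset) simp
  qed
  show cm: "continuous_map (top_of_set (Dset n)) (top_of_set ({0..1} \<times> hawaiian n)) (Phi n)"
    using cont img by auto
  show "closed_map (top_of_set (Dset n)) (top_of_set ({0..1} \<times> hawaiian n)) (Phi n)"
  proof (rule continuous_imp_closed_map[OF cm])
    have "compact (Dset n)" unfolding Dset_def
      by (intro compact_Times compact_Kset compact_hcube compact_Icc)
    then show "compact_space (top_of_set (Dset n))"
      by (simp add: compact_space_subtopology)
    show "Hausdorff_space (top_of_set ({0..1::real} \<times> hawaiian n))"
      by (simp add: Hausdorff_space_subtopology)
  qed
  show "Phi n ` topspace (top_of_set (Dset n)) = topspace (top_of_set ({0..1} \<times> hawaiian n))"
    using img by simp
qed

lemma key_lift:
  fixes H :: "(real \<times> real) \<times> (nat \<Rightarrow> real) \<Rightarrow> 'a"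
  assumes n: "n \<ge> 1" and H: "continuous_map (top_of_set (Dset n)) X H"
    and Hb: "\<And>tau t s. ((tau, t), s) \<in> Dset n \<Longrightarrow> bdZ n (t, s) \<Longrightarrow> H ((tau, t), s) = x0"
  shows "\<exists>h. continuous_map (top_of_set ({0..1} \<times> hawaiian n)) X h \<and>
     (\<forall>tau t s. ((tau, t), s) \<in> Dset n \<longrightarrow> h (tau, Q n (t, s)) = H ((tau, t), s))"
proof -
  define h where "h = (\<lambda>y::real \<times> (nat \<Rightarrow> real). H ((fst y, fst (iota n (snd y))), snd (iota n (snd y))))"
  have eq: "h (tau, Q n (t, s)) = H ((tau, t), s)" if w: "((tau, t), s) \<in> Dset n" for tau t s
  proof -
    have z: "(t, s) \<in> Zset n" and tau: "tau \<in> {0..1}" using w by (auto simp: Dset_def Zset_def)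
    obtain t' s' where ts': "iota n (Q n (t, s)) = (t', s')" by fastforce
    have z': "(t', s') \<in> Zset n" using iota_Q(1)[OF n z] ts' by simp
    have w': "((tau, t'), s') \<in> Dset n" using z' tau by (auto simp: Dset_def Zset_def)
    show ?thesis
    proof (cases "bdZ n (t, s)")
      case True
      then have "bdZ n (t', s')" using iota_Q(3)[OF n z] ts' by simp
      then show ?thesis using Hb[OF w True] Hb[OF w'] ts' by (simp add: h_def)
    next
      case False
      then show ?thesis using iota_Q(4)[OF n z] by (simp add: h_def)
    qed
  qed
  have "continuous_map (top_of_set (Dset n)) X (h \<circ> Phi n)"
    by (rule continuous_map_eq[OF H]) (auto simp: Phi_def eq)
  then have "continuous_map (top_of_set ({0..1} \<times> hawaiian n)) X h"
    by (rule continuous_compose_quotient_map[OF quotient_Phi[OF n]])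
  then show ?thesis using eq by blast
qed

definition good :: "nat \<Rightarrow> 'w::topological_space set \<Rightarrow> ('w \<Rightarrow> bool) \<Rightarrow> 'a topology \<Rightarrow> 'a
    \<Rightarrow> ('w \<times> (nat \<Rightarrow> real) \<Rightarrow> 'a) \<Rightarrow> bool" where
  "good n W B X x0 F \<longleftrightarrow> continuous_map (top_of_set (W \<times> hcube n)) X F \<and>
     (\<forall>w s. w \<in> W \<longrightarrow> s \<in> hcube n \<longrightarrow> (B w \<or> bd n s) \<longrightarrow> F (w, s) = x0)"

abbreviation "goodZ n X x0 F \<equiv> good n Kset (\<lambda>t. t = 0) X x0 F"
abbreviation "goodH n X x0 H \<equiv> good n ({0..1::real} \<times> Kset) (\<lambda>w. snd w = 0) X x0 H"

lemma Dset_eq: "Dset n = ({0..1} \<times> Kset) \<times> hcube n" by (simp add: Dset_def)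

lemma key_htpy:
  fixes H :: "(real \<times> real) \<times> (nat \<Rightarrow> real) \<Rightarrow> 'a"
  assumes n: "n \<ge> 1" and H: "goodH n X x0 H"
    and f0: "\<And>t s. (t, s) \<in> Zset n \<Longrightarrow> f (Q n (t, s)) = H ((0, t), s)"
    and g1: "\<And>t s. (t, s) \<in> Zset n \<Longrightarrow> g (Q n (t, s)) = H ((1, t), s)"
  shows "homotopic_with (\<lambda>h. h hbase = x0) (hawaiian_top n) X f g"
proof -
  have Hc: "continuous_map (top_of_set (Dset n)) X H" using H by (simp add: good_def Dset_eq)
  have Hb: "H ((tau, t), s) = x0" if "((tau, t), s) \<in> Dset n" "bdZ n (t, s)" for tau t s
    using H that by (auto simp: good_def Dset_eq bdZ_def)
  obtain h where h: "continuous_map (top_of_set ({0..1} \<times> hawaiian n)) X h"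
    and hH: "\<And>tau t s. ((tau, t), s) \<in> Dset n \<Longrightarrow> h (tau, Q n (t, s)) = H ((tau, t), s)"
    using key_lift[OF n Hc Hb] by blast
  define h' where "h' = (\<lambda>y::real \<times> (nat \<Rightarrow> real). if fst y = 0 then f (snd y) else if fst y = 1 then g (snd y) else h y)"
  have agree: "h y = h' y" if y: "y \<in> {0..1} \<times> hawaiian n" for y
  proof -
    obtain tau p where tp: "y = (tau, p)" "tau \<in> {0..1}" "p \<in> hawaiian n" using y by auto
    then have "p \<in> Q n ` Zset n" using Q_image[OF n] by simp
    then obtain z where z: "z \<in> Zset n" "p = Q n z" by blast
    obtain t s where "z = (t, s)" by fastforce
    then have ts: "(t, s) \<in> Zset n" "p = Q n (t, s)" using z by auto
    have d: "((tau, t), s) \<in> Dset n" using ts tp by (auto simp: Dset_def Zset_def)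
    have d0: "((0, t), s) \<in> Dset n" and d1: "((1, t), s) \<in> Dset n" using ts by (auto simp: Dset_def Zset_def)
    show ?thesis using hH[OF d] hH[OF d0] hH[OF d1] f0[OF ts(1)] g1[OF ts(1)] tp ts
      by (auto simp: h'_def)
  qed
  have top: "prod_topology (top_of_set {0..1::real}) (hawaiian_top n) = top_of_set ({0..1} \<times> hawaiian n)"
    by (simp add: hawtop)
  have "continuous_map (top_of_set ({0..1} \<times> hawaiian n)) X h'"
    by (rule continuous_map_eq[OF h]) (simp add: agree)
  moreover have "h' (tau, hbase) = x0" if "tau \<in> {0..1}" for tau
  proof -
    define s0 where "s0 = (\<lambda>i::nat. 0::real)"
    have s0: "s0 \<in> hcube n" by (simp add: s0_def hcube_def)
    have d: "((tau, 0), s0) \<in> Dset n" using that s0 by (auto simp: Dset_def Kset_def)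
    have "h (tau, hbase) = x0" using hH[OF d] Hb[OF d] Q_zero_t[of n s0] by (simp add: bdZ_def)
    moreover have "(tau, hbase) \<in> {0..1} \<times> hawaiian n" using that hbase_hawaiian by auto
    ultimately show ?thesis using agree by simp
  qed
  ultimately show ?thesis unfolding homotopic_with_def top
    by (intro exI[of _ h']) (auto simp: h'_def)
qed

definition cc :: "nat \<Rightarrow> ('w \<times> (nat \<Rightarrow> real) \<Rightarrow> 'a) \<Rightarrow> ('w \<times> (nat \<Rightarrow> real) \<Rightarrow> 'a) \<Rightarrow> 'w \<times> (nat \<Rightarrow> real) \<Rightarrow> 'a" where
  "cc j F G = (\<lambda>x. if snd x j \<le> 1/2 then F (fst x, (snd x)(j := 2 * snd x j)) else G (fst x, (snd x)(j := 2 * snd x j - 1)))"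

lemma upd_hcube: "s \<in> hcube n \<Longrightarrow> j \<in> {1..n} \<Longrightarrow> 0 \<le> a \<Longrightarrow> a \<le> 1 \<Longrightarrow> s(j := a) \<in> hcube n"
  unfolding hcube_def by auto

lemma hcube_le: "s \<in> hcube n \<Longrightarrow> j \<in> {1..n} \<Longrightarrow> 0 \<le> s j \<and> s j \<le> 1"
  unfolding hcube_def by auto

lemma bd_upd: "j \<in> {1..n} \<Longrightarrow> (a = 0 \<or> a = 1) \<Longrightarrow> bd n (s(j := a))"
  unfolding bd_def by auto

lemma bd_upd_cases: "bd n s \<Longrightarrow> j \<in> {1..n} \<Longrightarrow> bd n (s(j := a)) \<or> s j = 0 \<or> s j = 1"
  unfolding bd_def by (metis fun_upd_other)

lemma cc_bd:
  assumes j: "j \<in> {1..n}" and s: "s \<in> hcube n"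
    and F: "\<And>s'. s' \<in> hcube n \<Longrightarrow> (B w \<or> bd n s') \<Longrightarrow> F (w, s') = x0"
    and G: "\<And>s'. s' \<in> hcube n \<Longrightarrow> (B w \<or> bd n s') \<Longrightarrow> G (w, s') = x0"
    and b: "B w \<or> bd n s"
  shows "cc j F G (w, s) = x0"
proof (cases "s j \<le> 1/2")
  case True
  have sj: "0 \<le> s j" using hcube_le[OF s j] by simp
  have m: "s(j := 2 * s j) \<in> hcube n" using True sj by (intro upd_hcube[OF s j]) auto
  have "B w \<or> bd n (s(j := 2 * s j))"
    using b bd_upd_cases[OF _ j, of s "2 * s j"] bd_upd[OF j, of 0 s] True by (cases "s j = 0") auto
  then show ?thesis using F[OF m] True by (simp add: cc_def)
next
  case False
  have sj: "s j \<le> 1" using hcube_le[OF s j] by simp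
  have m: "s(j := 2 * s j - 1) \<in> hcube n" using False sj by (intro upd_hcube[OF s j]) auto
  have "B w \<or> bd n (s(j := 2 * s j - 1))"
    using b bd_upd_cases[OF _ j, of s "2 * s j - 1"] bd_upd[OF j, of 1 s] False by (cases "s j = 1") auto
  then show ?thesis using G[OF m] False by (simp add: cc_def)
qed

lemma cont_upd:
  fixes g :: "'b::topological_space \<Rightarrow> nat \<Rightarrow> real"
  assumes "continuous_on S a" "continuous_on S g"
  shows "continuous_on S (\<lambda>x. (g x)(j := a x))"
proof (intro continuous_on_coordinatewise_then_product)
  fix i
  show "continuous_on S (\<lambda>x. ((g x)(j := a x)) i)"
  proof (cases "i = j")
    case True then show ?thesis using assms(1) by simp
  next
    case False then show ?thesis using continuous_on_product_then_coordinatewise[OF assms(2)] by simp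
  qed
qed

lemma cont_snd_coord: "continuous_on S (\<lambda>x::'w::topological_space \<times> (nat \<Rightarrow> real). snd x j)"
  by (rule continuous_on_compose2[OF continuous_on_product_coordinates[of j]])
     (auto intro: continuous_on_snd continuous_on_id)

lemma cc_good:
  fixes W :: "'w::topological_space set"
  assumes j: "j \<in> {1..n}" and F: "good n W B X x0 F" and G: "good n W B X x0 G"
  shows "good n W B X x0 (cc j F G)"
proof -
  let ?X0 = "top_of_set (W \<times> hcube n)"
  have Fc: "continuous_map ?X0 X F" and Gc: "continuous_map ?X0 X G" using F G by (auto simp: good_def)
  have Fb: "\<And>w s. w \<in> W \<Longrightarrow> s \<in> hcube n \<Longrightarrow> (B w \<or> bd n s) \<Longrightarrow> F (w, s) = x0" using F by (auto simp: good_def)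
  have Gb: "\<And>w s. w \<in> W \<Longrightarrow> s \<in> hcube n \<Longrightarrow> (B w \<or> bd n s) \<Longrightarrow> G (w, s) = x0" using G by (auto simp: good_def)
  define A1 where "A1 = {x \<in> W \<times> hcube n. snd x j \<le> 1/2}"
  define A2 where "A2 = {x \<in> W \<times> hcube n. 1/2 \<le> snd x j}"
  define g1 where "g1 = (\<lambda>x::'w \<times> (nat \<Rightarrow> real). (fst x, (snd x)(j := 2 * snd x j)))"
  define g2 where "g2 = (\<lambda>x::'w \<times> (nat \<Rightarrow> real). (fst x, (snd x)(j := 2 * snd x j - 1)))"
  have g1c: "continuous_on A1 g1" unfolding g1_def
    by (intro continuous_on_Pair continuous_on_fst continuous_on_id cont_upd continuous_on_snd
          continuous_on_mult continuous_on_const cont_snd_coord)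
  have g2c: "continuous_on A2 g2" unfolding g2_def
    by (intro continuous_on_Pair continuous_on_fst continuous_on_id cont_upd continuous_on_snd
          continuous_on_diff continuous_on_mult continuous_on_const cont_snd_coord)
  have g1i: "g1 ` A1 \<subseteq> W \<times> hcube n"
  proof
    fix y assume "y \<in> g1 ` A1"
    then obtain w s where ws: "w \<in> W" "s \<in> hcube n" "s j \<le> 1/2" "y = g1 (w, s)" by (auto simp: A1_def)
    then show "y \<in> W \<times> hcube n" using hcube_le[OF ws(2) j] upd_hcube[OF ws(2) j, of "2 * s j"] by (simp add: g1_def)
  qed
  have g2i: "g2 ` A2 \<subseteq> W \<times> hcube n"
  proof
    fix y assume "y \<in> g2 ` A2"
    then obtain w s where ws: "w \<in> W" "s \<in> hcube n" "1/2 \<le> s j" "y = g2 (w, s)" by (auto simp: A2_def)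
    then show "y \<in> W \<times> hcube n" using hcube_le[OF ws(2) j] upd_hcube[OF ws(2) j, of "2 * s j - 1"] by (simp add: g2_def)
  qed
  have s1: "subtopology ?X0 {x. x \<in> topspace ?X0 \<and> snd x j \<le> 1/2} = top_of_set A1"
    by (simp add: subtopology_subtopology A1_def Int_def)
  have s2: "subtopology ?X0 {x. x \<in> topspace ?X0 \<and> 1/2 \<le> snd x j} = top_of_set A2"
    by (simp add: subtopology_subtopology A2_def Int_def)
  have c1: "continuous_map (top_of_set A1) X (F \<circ> g1)"
    by (rule continuous_map_compose[OF _ Fc]) (use g1c g1i in auto)
  have c2: "continuous_map (top_of_set A2) X (G \<circ> g2)"
    by (rule continuous_map_compose[OF _ Gc]) (use g2c g2i in auto)
  have "continuous_map ?X0 X (\<lambda>x. if snd x j \<le> 1/2 then (F \<circ> g1) x else (G \<circ> g2) x)"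
  proof (rule continuous_map_cases_le)
    show "continuous_map ?X0 euclideanreal (\<lambda>x. snd x j)" by (simp add: cont_snd_coord)
    show "continuous_map ?X0 euclideanreal (\<lambda>x. 1/2)" by simp
    show "continuous_map (subtopology ?X0 {x. x \<in> topspace ?X0 \<and> snd x j \<le> 1/2}) X (F \<circ> g1)"
      unfolding s1 by (rule c1)
    show "continuous_map (subtopology ?X0 {x. x \<in> topspace ?X0 \<and> 1/2 \<le> snd x j}) X (G \<circ> g2)"
      unfolding s2 by (rule c2)
  next
    fix x assume x: "x \<in> topspace ?X0" "snd x j = 1/2"
    obtain w s where ws: "x = (w, s)" "w \<in> W" "s \<in> hcube n" using x by auto
    have "F (w, s(j := 1)) = x0" using Fb[OF ws(2) upd_hcube[OF ws(3) j]] bd_upd[OF j] by auto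
    moreover have "G (w, s(j := 0)) = x0" using Gb[OF ws(2) upd_hcube[OF ws(3) j]] bd_upd[OF j] by auto
    moreover have "2 * s j = 1" "2 * s j - 1 = 0" using x ws by auto
    ultimately show "(F \<circ> g1) x = (G \<circ> g2) x" using ws by (simp add: g1_def g2_def)
  qed
  then have "continuous_map ?X0 X (cc j F G)" unfolding cc_def g1_def g2_def comp_def by simp
  moreover have "\<forall>w s. w \<in> W \<longrightarrow> s \<in> hcube n \<longrightarrow> (B w \<or> bd n s) \<longrightarrow> cc j F G (w, s) = x0"
  proof (intro allI impI)
    fix w s assume w: "w \<in> W" and s: "s \<in> hcube n" and b: "B w \<or> bd n s"
    show "cc j F G (w, s) = x0"
      by (rule cc_bd[where B=B, OF j s]) (use Fb Gb w b in auto)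
  qed
  ultimately show ?thesis by (simp add: good_def)
qed

definition Zm :: "nat \<Rightarrow> ((nat \<Rightarrow> real) \<Rightarrow> 'a) \<Rightarrow> real \<times> (nat \<Rightarrow> real) \<Rightarrow> 'a" where
  "Zm n f = (\<lambda>z. f (Q n z))"

lemma Phi_cont: "n \<ge> 1 \<Longrightarrow> continuous_map (top_of_set (Dset n)) (top_of_set ({0..1} \<times> hawaiian n)) (Phi n)"
  using quotient_Phi quotient_imp_continuous_map by blast

lemma Q_cont_map: assumes n: "n \<ge> 1" shows "continuous_map (top_of_set (Zset n)) (top_of_set (hawaiian n)) (Q n)"
  using cont_Q[OF n] Q_image[OF n] by (auto intro: continuous_on_subset)

lemma map_good:
  assumes n: "n \<ge> 1" and f: "continuous_map (hawaiian_top n) X f" and fb: "f hbase = x0"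
  shows "goodZ n X x0 (Zm n f)"
  unfolding good_def
proof (intro conjI allI impI)
  have "continuous_map (top_of_set (Zset n)) X (f \<circ> Q n)"
    by (rule continuous_map_compose[OF Q_cont_map[OF n]]) (use f in \<open>simp add: hawtop\<close>)
  then show "continuous_map (top_of_set (Kset \<times> hcube n)) X (Zm n f)"
    by (simp add: Zm_def Zset_def o_def)
next
  fix w s assume "w \<in> Kset" "s \<in> hcube n" "w = 0 \<or> bd n s"
  then have "Q n (w, s) = hbase" using Q_base[OF n, of "(w, s)"] by (simp add: Zset_def bdZ_def)
  then show "Zm n f (w, s) = x0" using fb by (simp add: Zm_def)
qed

lemma htpy_good:
  assumes n: "n \<ge> 1" and k: "continuous_map (prod_topology (top_of_set {0..1}) (hawaiian_top n)) X k"
    and kb: "\<And>tau. tau \<in> {0..1} \<Longrightarrow> k (tau, hbase) = x0"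
  shows "goodH n X x0 (k \<circ> Phi n)"
  unfolding good_def
proof (intro conjI allI impI)
  have k': "continuous_map (top_of_set ({0..1} \<times> hawaiian n)) X k" using k by (simp add: hawtop)
  show "continuous_map (top_of_set (({0..1::real} \<times> Kset) \<times> hcube n)) X (k \<circ> Phi n)"
    using continuous_map_compose[OF Phi_cont[OF n] k'] by (simp add: Dset_def)
next
  fix w s assume w: "w \<in> {0..1::real} \<times> Kset" and s: "s \<in> hcube n" and b: "snd w = 0 \<or> bd n s"
  have "Q n (snd w, s) = hbase" using Q_base[OF n, of "(snd w, s)"] w s b by (auto simp: Zset_def bdZ_def)
  then show "(k \<circ> Phi n) (w, s) = x0" using kb w by (auto simp: Phi_def)
qed

lemma const_good:
  assumes F: "goodZ n X x0 F"
  shows "goodH n X x0 (\<lambda>w. F (snd (fst w), snd w))"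
  unfolding good_def
proof (intro conjI allI impI)
  have Fc: "continuous_map (top_of_set (Kset \<times> hcube n)) X F" using F by (simp add: good_def)
  have "continuous_map (top_of_set (({0..1::real} \<times> Kset) \<times> hcube n)) (top_of_set (Kset \<times> hcube n))
      (\<lambda>w::(real \<times> real) \<times> (nat \<Rightarrow> real). (snd (fst w), snd w))"
    by (auto intro!: continuous_on_Pair continuous_on_snd continuous_on_fst continuous_on_id)
  from continuous_map_compose[OF this Fc]
  show "continuous_map (top_of_set (({0..1::real} \<times> Kset) \<times> hcube n)) X (\<lambda>w. F (snd (fst w), snd w))"
    by (simp add: o_def)
next
  fix w s assume "w \<in> {0..1::real} \<times> Kset" "s \<in> hcube n" "snd w = 0 \<or> bd n s"
  then show "F (snd (fst (w, s)), snd (w, s)) = x0" using F by (auto simp: good_def)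
qed

definition clamp :: "real \<Rightarrow> real" where "clamp c = max 0 (min 1 c)"

lemma clamp_01: "0 \<le> clamp c" "clamp c \<le> 1" by (auto simp: clamp_def)
lemma clamp_id: "0 \<le> c \<Longrightarrow> c \<le> 1 \<Longrightarrow> clamp c = c" by (auto simp: clamp_def)
lemma clamp_le0: "c \<le> 0 \<Longrightarrow> clamp c = 0" by (auto simp: clamp_def)
lemma clamp_ge1: "1 \<le> c \<Longrightarrow> clamp c = 1" by (auto simp: clamp_def)

lemma reparam_good:
  fixes rho :: "real \<times> real \<Rightarrow> real"
  assumes j: "j \<in> {1..n}" and F: "goodZ n X x0 F"
    and rc: "continuous_on ({0..1} \<times> {0..1}) rho"
    and r0: "\<And>tau. tau \<in> {0..1} \<Longrightarrow> rho (tau, 0) \<le> 0 \<or> 1 \<le> rho (tau, 0)"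
    and r1: "\<And>tau. tau \<in> {0..1} \<Longrightarrow> rho (tau, 1) \<le> 0 \<or> 1 \<le> rho (tau, 1)"
  shows "goodH n X x0 (\<lambda>w. F (snd (fst w), (snd w)(j := clamp (rho (fst (fst w), snd w j)))))"
  unfolding good_def
proof (intro conjI allI impI)
  have Fc: "continuous_map (top_of_set (Kset \<times> hcube n)) X F" using F by (simp add: good_def)
  let ?D = "({0..1::real} \<times> Kset) \<times> hcube n"
  let ?r = "\<lambda>w::(real \<times> real) \<times> (nat \<Rightarrow> real). (snd (fst w), (snd w)(j := clamp (rho (fst (fst w), snd w j))))"
  have inner: "continuous_on ?D (\<lambda>w::(real \<times> real) \<times> (nat \<Rightarrow> real). (fst (fst w), snd w j))"
    by (intro continuous_on_Pair continuous_on_fst continuous_on_id cont_snd_coord)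
  have inner_img: "(\<lambda>w::(real \<times> real) \<times> (nat \<Rightarrow> real). (fst (fst w), snd w j)) ` ?D \<subseteq> {0..1} \<times> {0..1}"
    using hcube_le[OF _ j] by auto
  have rhoc: "continuous_on ?D (\<lambda>w. rho (fst (fst w), snd w j))"
    by (rule continuous_on_compose2[OF rc inner inner_img])
  have clc: "continuous_on ?D (\<lambda>w. clamp (rho (fst (fst w), snd w j)))"
    unfolding clamp_def by (intro continuous_on_max continuous_on_min continuous_on_const rhoc)
  have rc2: "continuous_on ?D ?r"
    by (intro continuous_on_Pair continuous_on_snd continuous_on_fst continuous_on_id cont_upd clc)
  have rimg: "?r ` ?D \<subseteq> Kset \<times> hcube n"
    using upd_hcube[OF _ j] clamp_01 by auto
  have "continuous_map (top_of_set ?D) (top_of_set (Kset \<times> hcube n)) ?r" using rc2 rimg by auto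
  from continuous_map_compose[OF this Fc]
  show "continuous_map (top_of_set ?D) X (\<lambda>w. F (snd (fst w), (snd w)(j := clamp (rho (fst (fst w), snd w j)))))"
    by (simp add: o_def)
next
  fix w s assume w: "w \<in> {0..1::real} \<times> Kset" and s: "s \<in> hcube n" and b: "snd w = 0 \<or> bd n s"
  let ?a = "clamp (rho (fst w, s j))"
  have m: "s(j := ?a) \<in> hcube n" using upd_hcube[OF s j] clamp_01 by auto
  have "snd w = 0 \<or> bd n (s(j := ?a))"
  proof (cases "snd w = 0")
    case False
    then have "bd n s" using b by simp
    then have "bd n (s(j := ?a)) \<or> s j = 0 \<or> s j = 1" using bd_upd_cases[OF _ j] by blast
    moreover have "bd n (s(j := ?a))" if "s j = 0 \<or> s j = 1"
    proof -
      have tau: "fst w \<in> {0..1}" using w by auto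
      have "rho (fst w, s j) \<le> 0 \<or> 1 \<le> rho (fst w, s j)" using that r0[OF tau] r1[OF tau] by auto
      then have "?a = 0 \<or> ?a = 1" using clamp_le0 clamp_ge1 by blast
      then show ?thesis by (rule bd_upd[OF j])
    qed
    ultimately show ?thesis by blast
  qed simp
  then show "F (snd (fst (w, s)), (snd (w, s))(j := clamp (rho (fst (fst (w, s)), snd (w, s) j)))) = x0"
    using F m w by (auto simp: good_def)
qed

definition lift :: "nat \<Rightarrow> (real \<times> (nat \<Rightarrow> real) \<Rightarrow> 'a) \<Rightarrow> (nat \<Rightarrow> real) \<Rightarrow> 'a" where
  "lift n F = (\<lambda>p. F (iota n p))"

lemma lift_Q:
  assumes n: "n \<ge> 1" and F: "goodZ n X x0 F" and z: "z \<in> Zset n"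
  shows "lift n F (Q n z) = F z"
proof (cases "bdZ n z")
  case True
  have i: "iota n (Q n z) \<in> Zset n" "bdZ n (iota n (Q n z))" using iota_Q[OF n z] True by auto
  have "F (iota n (Q n z)) = x0" using F i by (cases "iota n (Q n z)") (auto simp: good_def Zset_def bdZ_def)
  moreover have "F z = x0" using F z True by (cases z) (auto simp: good_def Zset_def bdZ_def)
  ultimately show ?thesis by (simp add: lift_def)
next
  case False
  then show ?thesis using iota_Q(4)[OF n z] by (simp add: lift_def)
qed

abbreviation "Rel n X x0 f g \<equiv> homotopic_with (\<lambda>h. h hbase = x0) (hawaiian_top n) X f g"

lemma Rel_const:
  assumes n: "n \<ge> 1" and F: "goodZ n X x0 F"
    and f: "\<And>z. z \<in> Zset n \<Longrightarrow> f (Q n z) = F z" and g: "\<And>z. z \<in> Zset n \<Longrightarrow> g (Q n z) = F z"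
  shows "Rel n X x0 f g"
  by (rule key_htpy[OF n const_good[OF F]]) (auto simp: f g)

lemma lift_cont:
  assumes n: "n \<ge> 1" and F: "goodZ n X x0 F"
  shows "continuous_map (hawaiian_top n) X (lift n F)" "lift n F hbase = x0"
proof -
  have "Rel n X x0 (lift n F) (lift n F)" by (rule Rel_const[OF n F]) (auto simp: lift_Q[OF n F])
  then show "continuous_map (hawaiian_top n) X (lift n F)" "lift n F hbase = x0"
    using homotopic_with_imp_continuous_maps homotopic_with_imp_property by blast+
qed

definition opj :: "nat \<Rightarrow> nat \<Rightarrow> ((nat \<Rightarrow> real) \<Rightarrow> 'a) \<Rightarrow> ((nat \<Rightarrow> real) \<Rightarrow> 'a) \<Rightarrow> (nat \<Rightarrow> real) \<Rightarrow> 'a" where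
  "opj n j f g = (if j = 1 then hmul n f g else lift n (cc j (Zm n f) (Zm n g)))"

lemma Zm_bd:
  assumes n: "n \<ge> 1" and fb: "f hbase = x0" and s: "s \<in> hcube n" and t: "t \<in> Kset" and b: "t = 0 \<or> bd n s"
  shows "Zm n f (t, s) = x0"
proof -
  have "Q n (t, s) = hbase" using Q_base[OF n, of "(t, s)"] s t b by (simp add: Zset_def bdZ_def)
  then show ?thesis using fb by (simp add: Zm_def)
qed

lemma hmul_Q:
  assumes n: "n \<ge> 1" and fb: "f hbase = x0" and gb: "g hbase = x0" and z: "z \<in> Zset n"
  shows "hmul n f g (Q n z) = cc 1 (Zm n f) (Zm n g) z"
proof -
  obtain t s where ts: "z = (t, s)" "t \<in> Kset" "s \<in> hcube n" using z by (auto simp: Zset_def)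
  have j: "(1::nat) \<in> {1..n}" using n by simp
  show ?thesis
  proof (cases "Q n z = hbase")
    case True
    then have b: "t = 0 \<or> bd n s" using Q_base[OF n z] ts by (simp add: bdZ_def)
    have "cc 1 (Zm n f) (Zm n g) (t, s) = x0"
      by (rule cc_bd[where B="\<lambda>t. t = 0", OF j ts(3)]) (use Zm_bd[where f=f, OF n fb, of _ t] Zm_bd[where f=g, OF n gb, of _ t] ts(2) b in auto)
    then show ?thesis using True fb ts by (simp add: hmul_def)
  next
    case False
    then have nb: "\<not> bdZ n z" using Q_base[OF n z] by simp
    then have "t \<noteq> 0" using ts by (simp add: bdZ_def)
    then obtain k where k: "k \<ge> 1" "t = 1 / real k" using Kset_cases[OF ts(2)] by auto
    have p: "Q n z = hquot n k s" using ts k by (simp add: hquot_Q)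
    have hi: "hindex n (Q n z) = k" using hindex_hquot[OF n k(1)] p False by simp
    have ex: "\<exists>s'. s' \<in> hcube n \<and> hquot n k s' = Q n z" using ts(3) p by (intro exI[of _ s]) simp
    define s' where "s' = (SOME s'. s' \<in> hcube n \<and> hquot n k s' = Q n z)"
    have s': "s' \<in> hcube n" "hquot n k s' = Q n z" using someI_ex[OF ex] unfolding s'_def by auto
    have z': "(1 / real k, s') \<in> Zset n" unfolding Zset_def using s'(1) Kset_inv[OF k(1)] by blast
    have "(1 / real k, s') = z"
      using Q_inj[OF n z z'] s'(2) nb by (simp add: hquot_Q)
    then have ss: "s' = s" by (metis snd_conv ts(1))
    have "hmul n f g (Q n z) = cube_concat (f \<circ> hquot n k) (g \<circ> hquot n k) s'"
      using False hi by (simp add: hmul_def Let_def s'_def)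
    also have "\<dots> = cc 1 (Zm n f) (Zm n g) z"
      using ss ts k by (simp add: cube_concat_def cc_def Zm_def hquot_Q)
    finally show ?thesis .
  qed
qed

lemma opj_Q:
  assumes n: "n \<ge> 2" and j: "j \<in> {1, 2}"
    and f: "continuous_map (hawaiian_top n) X f" "f hbase = x0"
    and g: "continuous_map (hawaiian_top n) X g" "g hbase = x0"
    and z: "z \<in> Zset n"
  shows "opj n j f g (Q n z) = cc j (Zm n f) (Zm n g) z"
proof (cases "j = 1")
  case True
  then show ?thesis using hmul_Q[of n f x0 g z] n f g z by (simp add: opj_def)
next
  case False
  then have j2: "j = 2" using j by simp
  have n1: "n \<ge> 1" using n by simp
  have "goodZ n X x0 (cc j (Zm n f) (Zm n g))"
    using j2 n by (intro cc_good map_good[OF n1 f] map_good[OF n1 g]) auto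
  then show ?thesis using lift_Q[OF n1 _ z] False by (simp add: opj_def)
qed

lemma cc_goodZ:
  assumes n: "n \<ge> 2" and j: "j \<in> {1, 2}"
    and f: "continuous_map (hawaiian_top n) X f" "f hbase = x0"
    and g: "continuous_map (hawaiian_top n) X g" "g hbase = x0"
  shows "goodZ n X x0 (cc j (Zm n f) (Zm n g))"
proof -
  have n1: "n \<ge> 1" using n by simp
  show ?thesis using j n by (intro cc_good map_good[OF n1 f] map_good[OF n1 g]) auto
qed

lemma opj_cont:
  assumes n: "n \<ge> 2" and j: "j \<in> {1, 2}"
    and f: "continuous_map (hawaiian_top n) X f" "f hbase = x0"
    and g: "continuous_map (hawaiian_top n) X g" "g hbase = x0"
  shows "continuous_map (hawaiian_top n) X (opj n j f g)" "opj n j f g hbase = x0"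
proof -
  have n1: "n \<ge> 1" using n by simp
  have "Rel n X x0 (opj n j f g) (opj n j f g)"
    by (rule Rel_const[OF n1 cc_goodZ[OF n j f g]]) (use opj_Q[OF n j f g] in auto)
  then show "continuous_map (hawaiian_top n) X (opj n j f g)" "opj n j f g hbase = x0"
    using homotopic_with_imp_continuous_maps homotopic_with_imp_property by blast+
qed

lemma Rel_based:
  assumes "Rel n X x0 f g"
  shows "continuous_map (hawaiian_top n) X f" "f hbase = x0" "continuous_map (hawaiian_top n) X g" "g hbase = x0"
  using assms homotopic_with_imp_continuous_maps homotopic_with_imp_property by blast+

lemma opj_cong:
  assumes n: "n \<ge> 2" and j: "j \<in> {1, 2}" and ff: "Rel n X x0 f f'" and gg: "Rel n X x0 g g'"
  shows "Rel n X x0 (opj n j f g) (opj n j f' g')"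
proof -
  have n1: "n \<ge> 1" using n by simp
  note fb = Rel_based[OF ff] and gb = Rel_based[OF gg]
  obtain kf where kf: "continuous_map (prod_topology (top_of_set {0..1::real}) (hawaiian_top n)) X kf"
    "\<And>x. kf (0, x) = f x" "\<And>x. kf (1, x) = f' x" "\<forall>tau\<in>{0..1}. kf (tau, hbase) = x0"
    using ff unfolding homotopic_with_def by blast
  obtain kg where kg: "continuous_map (prod_topology (top_of_set {0..1::real}) (hawaiian_top n)) X kg"
    "\<And>x. kg (0, x) = g x" "\<And>x. kg (1, x) = g' x" "\<forall>tau\<in>{0..1}. kg (tau, hbase) = x0"
    using gg unfolding homotopic_with_def by blast
  have jn: "j \<in> {1..n}" using j n by auto
  have H: "goodH n X x0 (cc j (kf \<circ> Phi n) (kg \<circ> Phi n))"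
    by (intro cc_good[OF jn] htpy_good[OF n1 kf(1) kf(4)[rule_format]] htpy_good[OF n1 kg(1) kg(4)[rule_format]])
  show ?thesis
  proof (rule key_htpy[OF n1 H])
    fix t s assume z: "(t, s) \<in> Zset n"
    show "opj n j f g (Q n (t, s)) = cc j (kf \<circ> Phi n) (kg \<circ> Phi n) ((0, t), s)"
      using opj_Q[OF n j fb(1,2) gb(1,2) z] kf(2) kg(2) by (simp add: cc_def Phi_def Zm_def)
    show "opj n j f' g' (Q n (t, s)) = cc j (kf \<circ> Phi n) (kg \<circ> Phi n) ((1, t), s)"
      using opj_Q[OF n j fb(3,4) gb(3,4) z] kf(3) kg(3) by (simp add: cc_def Phi_def Zm_def)
  qed
qed

lemma reparam_Rel:
  fixes rho :: "real \<times> real \<Rightarrow> real"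
  assumes n: "n \<ge> 1" and j: "j \<in> {1..n}"
    and f: "continuous_map (hawaiian_top n) X f" "f hbase = x0"
    and rc: "continuous_on ({0..1} \<times> {0..1}) rho"
    and r0: "\<And>tau. tau \<in> {0..1} \<Longrightarrow> rho (tau, 0) \<le> 0 \<or> 1 \<le> rho (tau, 0)"
    and r1: "\<And>tau. tau \<in> {0..1} \<Longrightarrow> rho (tau, 1) \<le> 0 \<or> 1 \<le> rho (tau, 1)"
    and g0: "\<And>t s. (t, s) \<in> Zset n \<Longrightarrow> g0 (Q n (t, s)) = Zm n f (t, s(j := clamp (rho (0, s j))))"
    and g1: "\<And>t s. (t, s) \<in> Zset n \<Longrightarrow> g1 (Q n (t, s)) = Zm n f (t, s(j := clamp (rho (1, s j))))"
  shows "Rel n X x0 g0 g1"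
proof (rule key_htpy[OF n reparam_good[OF j map_good[OF n f] rc r0 r1]])
  fix t s assume z: "(t, s) \<in> Zset n"
  show "g0 (Q n (t, s)) = Zm n f (snd (fst ((0, t), s)), (snd ((0, t), s))(j := clamp (rho (fst (fst ((0, t), s)), snd ((0, t), s) j))))"
    using g0[OF z] by simp
  show "g1 (Q n (t, s)) = Zm n f (snd (fst ((1, t), s)), (snd ((1, t), s))(j := clamp (rho (fst (fst ((1, t), s)), snd ((1, t), s) j))))"
    using g1[OF z] by simp
qed

lemma Zm_upd_bd:
  assumes n: "n \<ge> 1" and fb: "f hbase = x0" and z: "(t, s) \<in> Zset n" and j: "j \<in> {1..n}" and a: "a = 0 \<or> a = 1"
  shows "Zm n f (t, s(j := a)) = x0"
proof -
  have "s(j := a) \<in> hcube n" using z a by (intro upd_hcube[OF _ j]) (auto simp: Zset_def)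
  moreover have "bd n (s(j := a))" using bd_upd[OF j a] .
  ultimately show ?thesis using Zm_bd[where f=f, OF n fb] z by (auto simp: Zset_def)
qed

lemma const_cb: "x0 \<in> topspace X \<Longrightarrow> continuous_map (hawaiian_top n) X (\<lambda>_. x0)"
  by simp

lemma unit_r:
  assumes n: "n \<ge> 2" and j: "j \<in> {1, 2}" and x0: "x0 \<in> topspace X"
    and f: "continuous_map (hawaiian_top n) X f" "f hbase = x0"
  shows "Rel n X x0 (opj n j f (\<lambda>_. x0)) f"
proof -
  have n1: "n \<ge> 1" using n by simp
  have jn: "j \<in> {1..n}" using j n by auto
  let ?rho = "\<lambda>x::real \<times> real. 2 * snd x / (1 + fst x)"
  show ?thesis
  proof (rule reparam_Rel[OF n1 jn f, where rho="?rho"])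
    show "continuous_on ({0..1} \<times> {0..1}) ?rho"
      by (intro continuous_on_divide continuous_on_mult continuous_on_const continuous_on_snd continuous_on_fst
          continuous_on_add continuous_on_id) auto
  next
    fix tau :: real assume "tau \<in> {0..1}"
    then show "?rho (tau, 0) \<le> 0 \<or> 1 \<le> ?rho (tau, 0)" "?rho (tau, 1) \<le> 0 \<or> 1 \<le> ?rho (tau, 1)"
      by auto
  next
    fix t s assume z: "(t, s) \<in> Zset n"
    have s: "s \<in> hcube n" using z by (simp add: Zset_def)
    have sj: "0 \<le> s j" "s j \<le> 1" using hcube_le[OF s jn] by auto
    have "opj n j f (\<lambda>_. x0) (Q n (t, s)) = cc j (Zm n f) (Zm n (\<lambda>_. x0)) (t, s)"
      using opj_Q[OF n j f const_cb[OF x0] _ z] by simp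
    also have "\<dots> = Zm n f (t, s(j := clamp (?rho (0, s j))))"
    proof (cases "s j \<le> 1/2")
      case True
      then have "clamp (2 * s j) = 2 * s j" using sj by (intro clamp_id) auto
      then show ?thesis using True by (simp add: cc_def)
    next
      case False
      then have "clamp (2 * s j) = 1" by (intro clamp_ge1) auto
      then show ?thesis using False Zm_upd_bd[where f=f, OF n1 f(2) z jn, of 1] by (simp add: cc_def Zm_def)
    qed
    finally show "opj n j f (\<lambda>_. x0) (Q n (t, s)) = Zm n f (t, s(j := clamp (?rho (0, s j))))" .
    have "clamp (s j) = s j" using sj by (intro clamp_id) auto
    then show "f (Q n (t, s)) = Zm n f (t, s(j := clamp (?rho (1, s j))))" by (simp add: Zm_def)
  qed
qed

lemma unit_l:
  assumes n: "n \<ge> 2" and j: "j \<in> {1, 2}" and x0: "x0 \<in> topspace X"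
    and f: "continuous_map (hawaiian_top n) X f" "f hbase = x0"
  shows "Rel n X x0 (opj n j (\<lambda>_. x0) f) f"
proof -
  have n1: "n \<ge> 1" using n by simp
  have jn: "j \<in> {1..n}" using j n by auto
  let ?rho = "\<lambda>x::real \<times> real. (2 * snd x - 1 + fst x) / (1 + fst x)"
  show ?thesis
  proof (rule reparam_Rel[OF n1 jn f, where rho="?rho"])
    show "continuous_on ({0..1} \<times> {0..1}) ?rho"
      by (intro continuous_on_divide continuous_on_mult continuous_on_const continuous_on_snd continuous_on_fst
          continuous_on_add continuous_on_diff continuous_on_id) auto
  next
    fix tau :: real assume "tau \<in> {0..1}"
    then show "?rho (tau, 0) \<le> 0 \<or> 1 \<le> ?rho (tau, 0)" "?rho (tau, 1) \<le> 0 \<or> 1 \<le> ?rho (tau, 1)"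
      by (auto simp: divide_le_0_iff)
  next
    fix t s assume z: "(t, s) \<in> Zset n"
    have s: "s \<in> hcube n" using z by (simp add: Zset_def)
    have sj: "0 \<le> s j" "s j \<le> 1" using hcube_le[OF s jn] by auto
    have "opj n j (\<lambda>_. x0) f (Q n (t, s)) = cc j (Zm n (\<lambda>_. x0)) (Zm n f) (t, s)"
      using opj_Q[OF n j const_cb[OF x0] _ f z] by simp
    also have "\<dots> = Zm n f (t, s(j := clamp (?rho (0, s j))))"
    proof (cases "s j \<le> 1/2")
      case True
      then have "clamp (2 * s j - 1) = 0" by (intro clamp_le0) auto
      then show ?thesis using True Zm_upd_bd[where f=f, OF n1 f(2) z jn, of 0] by (simp add: cc_def Zm_def)
    next
      case False
      then have "clamp (2 * s j - 1) = 2 * s j - 1" using sj by (intro clamp_id) auto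
      then show ?thesis using False by (simp add: cc_def)
    qed
    finally show "opj n j (\<lambda>_. x0) f (Q n (t, s)) = Zm n f (t, s(j := clamp (?rho (0, s j))))" .
    have "clamp (s j) = s j" using sj by (intro clamp_id) auto
    then show "f (Q n (t, s)) = Zm n f (t, s(j := clamp (?rho (1, s j))))" by (simp add: Zm_def)
  qed
qed

lemma flip_good:
  assumes j: "j \<in> {1..n}" and F: "goodZ n X x0 F"
  shows "goodZ n X x0 (\<lambda>z. F (fst z, (snd z)(j := 1 - snd z j)))"
  unfolding good_def
proof (intro conjI allI impI)
  have Fc: "continuous_map (top_of_set (Kset \<times> hcube n)) X F" using F by (simp add: good_def)
  let ?r = "\<lambda>z::real \<times> (nat \<Rightarrow> real). (fst z, (snd z)(j := 1 - snd z j))"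
  have rc: "continuous_on (Kset \<times> hcube n) ?r"
    by (intro continuous_on_Pair continuous_on_snd continuous_on_fst continuous_on_id cont_upd
         continuous_on_diff continuous_on_const cont_snd_coord)
  have ri: "?r ` (Kset \<times> hcube n) \<subseteq> Kset \<times> hcube n"
    using upd_hcube[OF _ j] hcube_le[OF _ j] by auto
  have "continuous_map (top_of_set (Kset \<times> hcube n)) (top_of_set (Kset \<times> hcube n)) ?r" using rc ri by auto
  from continuous_map_compose[OF this Fc]
  show "continuous_map (top_of_set (Kset \<times> hcube n)) X (\<lambda>z. F (fst z, (snd z)(j := 1 - snd z j)))"
    by (simp add: o_def)
next
  fix w s assume w: "w \<in> Kset" and s: "s \<in> hcube n" and b: "w = 0 \<or> bd n s"
  have m: "s(j := 1 - s j) \<in> hcube n" using upd_hcube[OF s j] hcube_le[OF s j] by auto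
  have "w = 0 \<or> bd n (s(j := 1 - s j))"
  proof (cases "w = 0")
    case False
    then have "bd n s" using b by simp
    then have "bd n (s(j := 1 - s j)) \<or> s j = 0 \<or> s j = 1" using bd_upd_cases[OF _ j] by blast
    moreover have "bd n (s(j := 1 - s j))" if "s j = 0 \<or> s j = 1"
      using that by (intro bd_upd[OF j]) auto
    ultimately show ?thesis by blast
  qed simp
  then show "F (fst (w, s), (snd (w, s))(j := 1 - snd (w, s) j)) = x0"
    using F m w by (auto simp: good_def)
qed

definition finv :: "nat \<Rightarrow> ((nat \<Rightarrow> real) \<Rightarrow> 'a) \<Rightarrow> (nat \<Rightarrow> real) \<Rightarrow> 'a" where
  "finv n f = lift n (\<lambda>z. Zm n f (fst z, (snd z)(1 := 1 - snd z 1)))"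

lemma finv_props:
  assumes n: "n \<ge> 2" and f: "continuous_map (hawaiian_top n) X f" "f hbase = x0"
  shows "continuous_map (hawaiian_top n) X (finv n f)" "finv n f hbase = x0"
    "\<And>z. z \<in> Zset n \<Longrightarrow> finv n f (Q n z) = Zm n f (fst z, (snd z)(1 := 1 - snd z 1))"
proof -
  have n1: "n \<ge> 1" using n by simp
  have j: "(1::nat) \<in> {1..n}" using n by simp
  note G = flip_good[OF j map_good[OF n1 f]]
  show "continuous_map (hawaiian_top n) X (finv n f)" "finv n f hbase = x0"
    unfolding finv_def using lift_cont[OF n1 G] by auto
  show "\<And>z. z \<in> Zset n \<Longrightarrow> finv n f (Q n z) = Zm n f (fst z, (snd z)(1 := 1 - snd z 1))"
    unfolding finv_def using lift_Q[OF n1 G] by simp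
qed

lemma inv_r:
  assumes n: "n \<ge> 2" and x0: "x0 \<in> topspace X"
    and f: "continuous_map (hawaiian_top n) X f" "f hbase = x0"
  shows "Rel n X x0 (opj n 1 f (finv n f)) (\<lambda>_. x0)"
proof -
  have n1: "n \<ge> 1" using n by simp
  have jn: "(1::nat) \<in> {1..n}" using n by auto
  have j: "(1::nat) \<in> {1, 2}" by simp
  note fi = finv_props[OF n f]
  let ?rho = "\<lambda>x::real \<times> real. (1 - fst x) * (1 - \<bar>2 * snd x - 1\<bar>)"
  show ?thesis
  proof (rule reparam_Rel[OF n1 jn f, where rho="?rho"])
    show "continuous_on ({0..1} \<times> {0..1}) ?rho"
      by (intro continuous_on_mult continuous_on_const continuous_on_snd continuous_on_fst
          continuous_on_rabs continuous_on_diff continuous_on_id)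
  next
    fix tau :: real assume "tau \<in> {0..1}"
    then show "?rho (tau, 0) \<le> 0 \<or> 1 \<le> ?rho (tau, 0)" "?rho (tau, 1) \<le> 0 \<or> 1 \<le> ?rho (tau, 1)"
      by auto
  next
    fix t s assume z: "(t, s) \<in> Zset n"
    have s: "s \<in> hcube n" using z by (simp add: Zset_def)
    have sj: "0 \<le> s 1" "s 1 \<le> 1" using hcube_le[OF s jn] by auto
    have "opj n 1 f (finv n f) (Q n (t, s)) = cc 1 (Zm n f) (Zm n (finv n f)) (t, s)"
      using opj_Q[OF n j f fi(1,2) z] by simp
    also have "\<dots> = Zm n f (t, s(1 := clamp (?rho (0, s 1))))"
    proof (cases "s 1 \<le> 1/2")
      case True
      then have "?rho (0, s 1) = 2 * s 1" by (simp add: abs_if)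
      moreover have "clamp (2 * s 1) = 2 * s 1" using sj True by (intro clamp_id) auto
      ultimately show ?thesis using True by (simp add: cc_def)
    next
      case False
      have z': "(t, s(1 := 2 * s 1 - 1)) \<in> Zset n"
        using z False sj upd_hcube[OF s jn, of "2 * s 1 - 1"] by (auto simp: Zset_def)
      have e1: "Zm n (finv n f) (t, s(1 := 2 * s 1 - 1)) = Zm n f (t, s(1 := 2 - 2 * s 1))"
        using fi(3)[OF z'] by (simp add: Zm_def)
      have "?rho (0, s 1) = 2 - 2 * s 1" using False by (simp add: abs_if)
      moreover have "clamp (2 - 2 * s 1) = 2 - 2 * s 1" using sj False by (intro clamp_id) auto
      ultimately show ?thesis using False e1 by (simp add: cc_def)
    qed
    finally show "opj n 1 f (finv n f) (Q n (t, s)) = Zm n f (t, s(1 := clamp (?rho (0, s 1))))" .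
    have "clamp 0 = 0" by (simp add: clamp_def)
    then show "x0 = Zm n f (t, s(1 := clamp (?rho (1, s 1))))"
      using Zm_upd_bd[where f=f, OF n1 f(2) z jn, of 0] by simp
  qed
qed

lemma cc_cong:
  assumes j: "j \<in> {1..n}" and z: "z \<in> Zset n"
    and F: "\<And>z'. z' \<in> Zset n \<Longrightarrow> F z' = F' z'" and G: "\<And>z'. z' \<in> Zset n \<Longrightarrow> G z' = G' z'"
  shows "cc j F G z = cc j F' G' z"
proof -
  obtain t s where ts: "z = (t, s)" "t \<in> Kset" "s \<in> hcube n" using z by (auto simp: Zset_def)
  have sj: "0 \<le> s j" "s j \<le> 1" using hcube_le[OF ts(3) j] by auto
  show ?thesis
  proof (cases "s j \<le> 1/2")
    case True
    have "(t, s(j := 2 * s j)) \<in> Zset n" using ts True sj upd_hcube[OF ts(3) j, of "2 * s j"] by (auto simp: Zset_def)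
    then show ?thesis using True F ts by (simp add: cc_def)
  next
    case False
    have "(t, s(j := 2 * s j - 1)) \<in> Zset n" using ts False sj upd_hcube[OF ts(3) j, of "2 * s j - 1"] by (auto simp: Zset_def)
    then show ?thesis using False G ts by (simp add: cc_def)
  qed
qed

lemma cc_interchange: "cc 1 (cc 2 A B) (cc 2 C D) z = cc 2 (cc 1 A C) (cc 1 B D) z"
  by (simp add: cc_def fun_upd_twist)

lemma interchange:
  assumes n: "n \<ge> 2"
    and a: "continuous_map (hawaiian_top n) X a" "a hbase = x0"
    and b: "continuous_map (hawaiian_top n) X b" "b hbase = x0"
    and c: "continuous_map (hawaiian_top n) X c" "c hbase = x0"
    and d: "continuous_map (hawaiian_top n) X d" "d hbase = x0"
  shows "Rel n X x0 (opj n 1 (opj n 2 a b) (opj n 2 c d)) (opj n 2 (opj n 1 a c) (opj n 1 b d))"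
proof -
  have n1: "n \<ge> 1" using n by simp
  have j1: "(1::nat) \<in> {1, 2}" and j2: "(2::nat) \<in> {1, 2}" by simp_all
  have j1n: "(1::nat) \<in> {1..n}" and j2n: "(2::nat) \<in> {1..n}" using n by auto
  note ab = opj_cont[OF n j2 a b] and cd = opj_cont[OF n j2 c d]
  note ac = opj_cont[OF n j1 a c] and bd' = opj_cont[OF n j1 b d]
  have F: "goodZ n X x0 (cc 1 (cc 2 (Zm n a) (Zm n b)) (cc 2 (Zm n c) (Zm n d)))"
    by (intro cc_good[OF j1n] cc_goodZ[OF n j2 a b] cc_goodZ[OF n j2 c d])
  show ?thesis
  proof (rule Rel_const[OF n1 F])
    fix z assume z: "z \<in> Zset n"
    have "opj n 1 (opj n 2 a b) (opj n 2 c d) (Q n z) = cc 1 (Zm n (opj n 2 a b)) (Zm n (opj n 2 c d)) z"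
      by (rule opj_Q[OF n j1 ab cd z])
    also have "\<dots> = cc 1 (cc 2 (Zm n a) (Zm n b)) (cc 2 (Zm n c) (Zm n d)) z"
      by (rule cc_cong[OF j1n z]) (simp_all add: Zm_def opj_Q[OF n j2 a b] opj_Q[OF n j2 c d])
    finally show "opj n 1 (opj n 2 a b) (opj n 2 c d) (Q n z) = cc 1 (cc 2 (Zm n a) (Zm n b)) (cc 2 (Zm n c) (Zm n d)) z" .
    have "opj n 2 (opj n 1 a c) (opj n 1 b d) (Q n z) = cc 2 (Zm n (opj n 1 a c)) (Zm n (opj n 1 b d)) z"
      by (rule opj_Q[OF n j2 ac bd' z])
    also have "\<dots> = cc 2 (cc 1 (Zm n a) (Zm n c)) (cc 1 (Zm n b) (Zm n d)) z"
    proof (rule cc_cong[OF j2n z])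
      fix z' assume z': "z' \<in> Zset n"
      show "Zm n (opj n 1 a c) z' = cc 1 (Zm n a) (Zm n c) z'"
        unfolding Zm_def by (rule opj_Q[OF n j1 a c z', unfolded Zm_def])
      show "Zm n (opj n 1 b d) z' = cc 1 (Zm n b) (Zm n d) z'"
        unfolding Zm_def by (rule opj_Q[OF n j1 b d z', unfolded Zm_def])
    qed
    also have "\<dots> = cc 1 (cc 2 (Zm n a) (Zm n b)) (cc 2 (Zm n c) (Zm n d)) z"
      by (rule cc_interchange[symmetric])
    finally show "opj n 2 (opj n 1 a c) (opj n 1 b d) (Q n z) = cc 1 (cc 2 (Zm n a) (Zm n b)) (cc 2 (Zm n c) (Zm n d)) z" .
  qed
qed

lemma opj1: "opj n 1 f g = hmul n f g" by (simp add: opj_def)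
lemma opj1': "opj n (Suc 0) f g = hmul n f g" by (simp add: opj_def)

lemma Rel_trans: "Rel n X x0 f g \<Longrightarrow> Rel n X x0 g h \<Longrightarrow> Rel n X x0 f h"
  by (rule homotopic_with_trans)

lemma Rel_sym: "Rel n X x0 f g \<Longrightarrow> Rel n X x0 g f"
  by (rule homotopic_with_symD)

lemma Rel_refl: "continuous_map (hawaiian_top n) X f \<Longrightarrow> f hbase = x0 \<Longrightarrow> Rel n X x0 f f"
  by simp

lemma eh_eq:
  assumes n: "n \<ge> 2" and x0: "x0 \<in> topspace X"
    and a: "continuous_map (hawaiian_top n) X a" "a hbase = x0"
    and b: "continuous_map (hawaiian_top n) X b" "b hbase = x0"
  shows "Rel n X x0 (opj n 1 a b) (opj n 2 a b)"
proof -
  have j1: "(1::nat) \<in> {1, 2}" and j2: "(2::nat) \<in> {1, 2}" by simp_all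
  note e = const_cb[OF x0, of n] refl[of "(\<lambda>_. x0) hbase"]
  have s1: "Rel n X x0 (opj n 1 a b) (opj n 1 (opj n 2 a (\<lambda>_. x0)) (opj n 2 (\<lambda>_. x0) b))"
    by (rule opj_cong[OF n j1 Rel_sym[OF unit_r[OF n j2 x0 a]] Rel_sym[OF unit_l[OF n j2 x0 b]]])
  have s2: "Rel n X x0 (opj n 1 (opj n 2 a (\<lambda>_. x0)) (opj n 2 (\<lambda>_. x0) b)) (opj n 2 (opj n 1 a (\<lambda>_. x0)) (opj n 1 (\<lambda>_. x0) b))"
    by (rule interchange[OF n a e e b])
  have s3: "Rel n X x0 (opj n 2 (opj n 1 a (\<lambda>_. x0)) (opj n 1 (\<lambda>_. x0) b)) (opj n 2 a b)"
    by (rule opj_cong[OF n j2 unit_r[OF n j1 x0 a] unit_l[OF n j1 x0 b]])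
  show ?thesis by (rule Rel_trans[OF Rel_trans[OF s1 s2] s3])
qed

lemma eh_comm:
  assumes n: "n \<ge> 2" and x0: "x0 \<in> topspace X"
    and a: "continuous_map (hawaiian_top n) X a" "a hbase = x0"
    and b: "continuous_map (hawaiian_top n) X b" "b hbase = x0"
  shows "Rel n X x0 (opj n 1 a b) (opj n 1 b a)"
proof -
  have j1: "(1::nat) \<in> {1, 2}" and j2: "(2::nat) \<in> {1, 2}" by simp_all
  note e = const_cb[OF x0, of n] refl[of "(\<lambda>_. x0) hbase"]
  have s1: "Rel n X x0 (opj n 1 a b) (opj n 1 (opj n 2 (\<lambda>_. x0) a) (opj n 2 b (\<lambda>_. x0)))"
    by (rule opj_cong[OF n j1 Rel_sym[OF unit_l[OF n j2 x0 a]] Rel_sym[OF unit_r[OF n j2 x0 b]]])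
  have s2: "Rel n X x0 (opj n 1 (opj n 2 (\<lambda>_. x0) a) (opj n 2 b (\<lambda>_. x0))) (opj n 2 (opj n 1 (\<lambda>_. x0) b) (opj n 1 a (\<lambda>_. x0)))"
    by (rule interchange[OF n e a b e])
  have s3: "Rel n X x0 (opj n 2 (opj n 1 (\<lambda>_. x0) b) (opj n 1 a (\<lambda>_. x0))) (opj n 2 b a)"
    by (rule opj_cong[OF n j2 unit_l[OF n j1 x0 b] unit_r[OF n j1 x0 a]])
  show ?thesis by (rule Rel_trans[OF Rel_trans[OF Rel_trans[OF s1 s2] s3] Rel_sym[OF eh_eq[OF n x0 b a]]])
qed

lemma eh_assoc:
  assumes n: "n \<ge> 2" and x0: "x0 \<in> topspace X"
    and a: "continuous_map (hawaiian_top n) X a" "a hbase = x0"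
    and b: "continuous_map (hawaiian_top n) X b" "b hbase = x0"
    and c: "continuous_map (hawaiian_top n) X c" "c hbase = x0"
  shows "Rel n X x0 (opj n 1 (opj n 1 a b) c) (opj n 1 a (opj n 1 b c))"
proof -
  have j1: "(1::nat) \<in> {1, 2}" and j2: "(2::nat) \<in> {1, 2}" by simp_all
  note e = const_cb[OF x0, of n] refl[of "(\<lambda>_. x0) hbase"]
  note ab2 = opj_cont[OF n j2 a b] and bc1 = opj_cont[OF n j1 b c]
  have s1: "Rel n X x0 (opj n 1 (opj n 1 a b) c) (opj n 1 (opj n 2 a b) (opj n 2 (\<lambda>_. x0) c))"
    by (rule opj_cong[OF n j1 eh_eq[OF n x0 a b] Rel_sym[OF unit_l[OF n j2 x0 c]]])
  have s2: "Rel n X x0 (opj n 1 (opj n 2 a b) (opj n 2 (\<lambda>_. x0) c)) (opj n 2 (opj n 1 a (\<lambda>_. x0)) (opj n 1 b c))"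
    by (rule interchange[OF n a b e c])
  have s3: "Rel n X x0 (opj n 2 (opj n 1 a (\<lambda>_. x0)) (opj n 1 b c)) (opj n 2 a (opj n 1 b c))"
    by (rule opj_cong[OF n j2 unit_r[OF n j1 x0 a] Rel_refl[OF bc1]])
  show ?thesis by (rule Rel_trans[OF Rel_trans[OF Rel_trans[OF s1 s2] s3] Rel_sym[OF eh_eq[OF n x0 a bc1]]])
qed

lemma hclass_eq:
  assumes f: "continuous_map (hawaiian_top n) X f" "f hbase = x0"
    and g: "continuous_map (hawaiian_top n) X g" "g hbase = x0"
  shows "hclass n X x0 f = hclass n X x0 g \<longleftrightarrow> Rel n X x0 f g"
proof
  assume eq: "hclass n X x0 f = hclass n X x0 g"
  have "g \<in> hclass n X x0 g" using g by (simp add: hclass_def)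
  then have "g \<in> hclass n X x0 f" using eq by simp
  then show "Rel n X x0 f g" unfolding hclass_def by simp
next
  assume fg: "Rel n X x0 f g"
  show "hclass n X x0 f = hclass n X x0 g"
    unfolding hclass_def
  proof (rule Collect_cong)
    fix h show "Rel n X x0 f h \<longleftrightarrow> Rel n X x0 g h"
      using Rel_trans[OF fg, of h] Rel_trans[OF Rel_sym[OF fg], of h] by blast
  qed
qed

lemma hclass_some:
  assumes f: "continuous_map (hawaiian_top n) X f" "f hbase = x0"
  shows "Rel n X x0 f (SOME f'. f' \<in> hclass n X x0 f)"
proof -
  have "f \<in> hclass n X x0 f" using f by (simp add: hclass_def)
  then have "(SOME f'. f' \<in> hclass n X x0 f) \<in> hclass n X x0 f" by (rule someI[where P="\<lambda>f'. f' \<in> hclass n X x0 f"])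
  then show ?thesis by (simp add: hclass_def)
qed

lemma mult_eq:
  assumes n: "n \<ge> 2"
    and f: "continuous_map (hawaiian_top n) X f" "f hbase = x0"
    and g: "continuous_map (hawaiian_top n) X g" "g hbase = x0"
  shows "mult (hawaiian_group n X x0) (hclass n X x0 f) (hclass n X x0 g) = hclass n X x0 (hmul n f g)"
proof -
  have j1: "(1::nat) \<in> {1, 2}" by simp
  define f' where "f' = (SOME f'. f' \<in> hclass n X x0 f)"
  define g' where "g' = (SOME g'. g' \<in> hclass n X x0 g)"
  have ff: "Rel n X x0 f f'" using hclass_some[OF f] by (simp add: f'_def)
  have gg: "Rel n X x0 g g'" using hclass_some[OF g] by (simp add: g'_def)
  have r: "Rel n X x0 (opj n 1 f g) (opj n 1 f' g')" by (rule opj_cong[OF n j1 ff gg])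
  note c1 = opj_cont[OF n j1 f g] and c2 = opj_cont[OF n j1 Rel_based(3,4)[OF ff] Rel_based(3,4)[OF gg]]
  have "hclass n X x0 (opj n 1 f' g') = hclass n X x0 (opj n 1 f g)"
    using hclass_eq[OF c2 c1] Rel_sym[OF r] by simp
  then show ?thesis by (simp add: hawaiian_group_def f'_def g'_def opj1 opj1')
qed

theorem theorem2p3:
  fixes X :: "'a topology" and x0 :: 'a and n :: nat
  assumes "x0 \<in> topspace X" and "n \<ge> 2"
  shows "comm_group (hawaiian_group n X x0)"
proof -
  note x0 = assms(1) and n = assms(2)
  let ?G = "hawaiian_group n X x0"
  let ?C = "hclass n X x0"
  have j1: "(1::nat) \<in> {1, 2}" by simp
  have carr: "carrier ?G = {?C f | f. continuous_map (hawaiian_top n) X f \<and> f hbase = x0}"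
    by (simp add: hawaiian_group_def)
  have one: "one ?G = ?C (\<lambda>_. x0)" by (simp add: hawaiian_group_def)
  note e = const_cb[OF x0, of n] refl[of "(\<lambda>_. x0) hbase"]
  have cE: "\<exists>f. x = ?C f \<and> continuous_map (hawaiian_top n) X f \<and> f hbase = x0" if "x \<in> carrier ?G" for x
    using that carr by auto
  have cI: "?C f \<in> carrier ?G" if "continuous_map (hawaiian_top n) X f" "f hbase = x0" for f
    using that carr by auto
  show ?thesis
  proof (rule comm_groupI)
    fix x y assume x: "x \<in> carrier ?G" and y: "y \<in> carrier ?G"
    obtain f where f: "x = ?C f" "continuous_map (hawaiian_top n) X f" "f hbase = x0" using cE[OF x] by blast
    obtain g where g: "y = ?C g" "continuous_map (hawaiian_top n) X g" "g hbase = x0" using cE[OF y] by blast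
    note fg = opj_cont[OF n j1 f(2,3) g(2,3), unfolded opj1]
    note gf = opj_cont[OF n j1 g(2,3) f(2,3), unfolded opj1]
    show "x \<otimes>\<^bsub>?G\<^esub> y \<in> carrier ?G"
      using mult_eq[OF n f(2,3) g(2,3)] cI[OF fg] f(1) g(1) by simp
    have "?C (hmul n f g) = ?C (hmul n g f)"
      using hclass_eq[OF fg gf] eh_comm[OF n x0 f(2,3) g(2,3)] by (simp add: opj1 opj1')
    then show "x \<otimes>\<^bsub>?G\<^esub> y = y \<otimes>\<^bsub>?G\<^esub> x"
      using mult_eq[OF n f(2,3) g(2,3)] mult_eq[OF n g(2,3) f(2,3)] f(1) g(1) by simp
  next
    show "\<one>\<^bsub>?G\<^esub> \<in> carrier ?G" using one cI[OF e] by simp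
  next
    fix x y z assume x: "x \<in> carrier ?G" and y: "y \<in> carrier ?G" and z: "z \<in> carrier ?G"
    obtain f where f: "x = ?C f" "continuous_map (hawaiian_top n) X f" "f hbase = x0" using cE[OF x] by blast
    obtain g where g: "y = ?C g" "continuous_map (hawaiian_top n) X g" "g hbase = x0" using cE[OF y] by blast
    obtain h where h: "z = ?C h" "continuous_map (hawaiian_top n) X h" "h hbase = x0" using cE[OF z] by blast
    note fg = opj_cont[OF n j1 f(2,3) g(2,3), unfolded opj1]
    note gh = opj_cont[OF n j1 g(2,3) h(2,3), unfolded opj1]
    note fgh1 = opj_cont[OF n j1 fg h(2,3), unfolded opj1]
    note fgh2 = opj_cont[OF n j1 f(2,3) gh, unfolded opj1]
    have "?C (hmul n (hmul n f g) h) = ?C (hmul n f (hmul n g h))"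
      using hclass_eq[OF fgh1 fgh2] eh_assoc[OF n x0 f(2,3) g(2,3) h(2,3)] by (simp add: opj1 opj1')
    then show "x \<otimes>\<^bsub>?G\<^esub> y \<otimes>\<^bsub>?G\<^esub> z = x \<otimes>\<^bsub>?G\<^esub> (y \<otimes>\<^bsub>?G\<^esub> z)"
      using mult_eq[OF n f(2,3) g(2,3)] mult_eq[OF n fg h(2,3)] mult_eq[OF n g(2,3) h(2,3)]
        mult_eq[OF n f(2,3) gh] f(1) g(1) h(1) by simp
  next
    fix x assume x: "x \<in> carrier ?G"
    obtain f where f: "x = ?C f" "continuous_map (hawaiian_top n) X f" "f hbase = x0" using cE[OF x] by blast
    note ef = opj_cont[OF n j1 e f(2,3), unfolded opj1]
    have "?C (hmul n (\<lambda>_. x0) f) = ?C f"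
      using hclass_eq[OF ef f(2,3)] unit_l[OF n j1 x0 f(2,3)] by (simp add: opj1 opj1')
    then show "\<one>\<^bsub>?G\<^esub> \<otimes>\<^bsub>?G\<^esub> x = x" using mult_eq[OF n e f(2,3)] one f(1) by simp
  next
    fix x assume x: "x \<in> carrier ?G"
    obtain f where f: "x = ?C f" "continuous_map (hawaiian_top n) X f" "f hbase = x0" using cE[OF x] by blast
    note fi = finv_props[OF n f(2,3)]
    note iff = opj_cont[OF n j1 fi(1,2) f(2,3), unfolded opj1]
    have r: "Rel n X x0 (opj n 1 (finv n f) f) (\<lambda>_. x0)"
      by (rule Rel_trans[OF eh_comm[OF n x0 fi(1,2) f(2,3)] inv_r[OF n x0 f(2,3)]])
    have "?C (hmul n (finv n f) f) = ?C (\<lambda>_. x0)"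
      using hclass_eq[OF iff e] r by (simp add: opj1 opj1')
    then have "?C (finv n f) \<otimes>\<^bsub>?G\<^esub> x = \<one>\<^bsub>?G\<^esub>"
      using mult_eq[OF n fi(1,2) f(2,3)] one f(1) by simp
    moreover have "?C (finv n f) \<in> carrier ?G" by (rule cI[OF fi(1,2)])
    ultimately show "\<exists>y\<in>carrier ?G. y \<otimes>\<^bsub>?G\<^esub> x = \<one>\<^bsub>?G\<^esub>" by blast
  qed
qed

end
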